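(* Let $d\ge2$ and let $\Delta\subseteq\mathbb{Q}^d$ be a $d$-dimensional IP simplex of Gorenstein index $g$. Then $$\mathrm{Vol}(\Delta)\,\mathrm{Vol}(\Delta^* )\le \frac{t_{g,d+1}^2}{g^{d+2}}.$$ Equality holds if and only if there is $H\in\mathrm{GL}(d,\mathbb{Q})$ such that $\Delta\cong H\cdot\Delta(P)$, where $P$ is the $d\times(d+1)$ matrix whose first $d$ columns are the standard basis vectors $e_1,\dots,e_d$ and whose last column is $\big(-\tfrac{t_{g,d+1}}{s_{g,1}},\dots,-\tfrac{t_{g,d+1}}{s_{g,d}}\big)^T$.
   Context: An IP simplex is a full-dimensional simplex in $\mathbb{Q}^d$ with rational vertices containing the origin in its interior. Its dual is $\Delta^*=\{u\in\mathbb{Q}^d:\langle u,v\rangle\ge-1\ \forall v\in\Delta\}$. $g_{\mathbb{Q}}(\Delta)$ is the least positive integer $k$ with $k\Delta$ having vertices in $\mathbb{Z}^d$, and the Gorenstein index is $g(\Delta)=g_{\mathbb{Q}}(\Delta)g_{\mathbb{Q}}(\Delta^* )$. $\mathrm{Vol}$ is $d!$ times Euclidean volume. $\cong$ means equality up to $\mathrm{GL}(d,\mathbb{Z})$; $\Delta(P)$ is the convex hull of the columns of $P$. Sylvester sequences: $s_{g,1}=g+1$, $s_{g,k+1}=s_{g,k}(s_{g,k}-1)+1$, $t_{g,k}=s_{g,k}-1$. *)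

theory Defs
  imports "HOL-Analysis.Analysis"
begin

text \<open>Sylvester sequences, indexed from 1: s g 1 = g+1, s g (k+1) = s g k * (s g k - 1) + 1.
  The value at index 0 is an unused dummy.\<close>
fun sylv_s :: "nat \<Rightarrow> nat \<Rightarrow> nat" where
  "sylv_s g 0 = 0"
| "sylv_s g (Suc 0) = g + 1"
| "sylv_s g (Suc (Suc k)) = sylv_s g (Suc k) * (sylv_s g (Suc k) - 1) + 1"

definition sylv_t :: "nat \<Rightarrow> nat \<Rightarrow> nat" where
  "sylv_t g k = sylv_s g k - 1"

definition rat_vec :: "real^'n \<Rightarrow> bool" where
  "rat_vec x \<longleftrightarrow> (\<forall>i. x $ i \<in> \<rat>)"

definition int_vec :: "real^'n \<Rightarrow> bool" where
  "int_vec x \<longleftrightarrow> (\<forall>i. x $ i \<in> \<int>)"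

definition IP_simplex :: "(real^'n) set \<Rightarrow> bool" where
  "IP_simplex S \<longleftrightarrow> (\<exists>V. finite V \<and> card V = CARD('n) + 1 \<and> \<not> affine_dependent V
      \<and> (\<forall>v\<in>V. rat_vec v) \<and> S = convex hull V \<and> 0 \<in> interior S)"

definition polar_dual :: "(real^'n) set \<Rightarrow> (real^'n) set" where
  "polar_dual S = {u. \<forall>v\<in>S. inner u v \<ge> -1}"

definition vertices :: "(real^'n) set \<Rightarrow> (real^'n) set" where
  "vertices S = {v. v extreme_point_of S}"

definition gQ :: "(real^'n) set \<Rightarrow> nat" where
  "gQ S = (LEAST k::nat. k > 0 \<and> (\<forall>v\<in>vertices S. int_vec (real k *\<^sub>R v)))"

definition gorenstein_index :: "(real^'n) set \<Rightarrow> nat" where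
  "gorenstein_index S = gQ S * gQ (polar_dual S)"

definition Vol :: "(real^'n) set \<Rightarrow> real" where
  "Vol S = fact CARD('n) * measure lebesgue S"

definition GLZ_equiv :: "(real^'n) set \<Rightarrow> (real^'n) set \<Rightarrow> bool" where
  "GLZ_equiv A B \<longleftrightarrow> (\<exists>U::real^'n^'n. (\<forall>i j. U $ i $ j \<in> \<int>) \<and> \<bar>det U\<bar> = 1
      \<and> A = (\<lambda>x. U *v x) ` B)"

definition GLQ :: "real^'n^'n \<Rightarrow> bool" where
  "GLQ H \<longleftrightarrow> (\<forall>i j. H $ i $ j \<in> \<rat>) \<and> det H \<noteq> 0"

definition coord_idx :: "'n::finite \<Rightarrow> nat" where
  "coord_idx = (SOME f. bij_betw f (UNIV::'n set) {1..CARD('n)})"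

text \<open>Delta(P) for the extremal matrix P: columns e_1..e_d and
  (-t_{g,d+1}/s_{g,1}, ..., -t_{g,d+1}/s_{g,d}).\<close>
definition extremal_simplex :: "nat \<Rightarrow> (real^'n) set" where
  "extremal_simplex g = convex hull
     (range (\<lambda>i::'n. axis i (1::real)) \<union>
      {\<chi> i. - real (sylv_t g (CARD('n) + 1)) / real (sylv_s g (coord_idx i))})"

end

theory Submission
  imports Defs
begin


lemma sylv_s_ge2: "g \<ge> 1 \<Longrightarrow> k \<ge> 1 \<Longrightarrow> sylv_s g k \<ge> 2"
proof (induction k rule: nat_less_induct)
  case (1 k)
  then show ?case
  proof (cases k)
    case 0 then show ?thesis using 1 by simp
  next
    case (Suc k')
    show ?thesis
    proof (cases k')
      case 0 then show ?thesis using Suc 1 by simp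
    next
      case (Suc k'')
      have h: "sylv_s g k' \<ge> 2" using 1 \<open>k = Suc k'\<close> Suc by simp
      have "sylv_s g k' * (sylv_s g k' - 1) \<ge> 2 * 1"
        by (rule mult_le_mono) (use h in auto)
      moreover have "sylv_s g k = sylv_s g k' * (sylv_s g k' - 1) + 1" using \<open>k = Suc k'\<close> Suc by simp
      ultimately show ?thesis by linarith
    qed
  qed
qed

lemma sylv_t_Suc: "k \<ge> 1 \<Longrightarrow> sylv_t g (Suc k) = sylv_s g k * sylv_t g k"
  by (cases k) (auto simp: sylv_t_def)

lemma sylv_t_1: "sylv_t g 1 = g" by (simp add: sylv_t_def)

lemma sylv_s_eq: "g \<ge> 1 \<Longrightarrow> k \<ge> 1 \<Longrightarrow> real (sylv_s g k) = real (sylv_t g k) + 1"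
  using sylv_s_ge2[of g k] by (simp add: sylv_t_def)

lemma sylv_t_pos: "g \<ge> 1 \<Longrightarrow> k \<ge> 1 \<Longrightarrow> sylv_t g k \<ge> 1"
  using sylv_s_ge2[of g k] by (simp add: sylv_t_def)

lemma prod_sylv: "g * (\<Prod>i<k. sylv_s g (Suc i)) = sylv_t g (Suc k)"
proof (induction k)
  case 0 then show ?case by (simp add: sylv_t_def)
next
  case (Suc k)
  have "g * (\<Prod>i<Suc k. sylv_s g (Suc i)) = (g * (\<Prod>i<k. sylv_s g (Suc i))) * sylv_s g (Suc k)"
    by (simp add: mult.assoc)
  also have "\<dots> = sylv_s g (Suc k) * sylv_t g (Suc k)" using Suc by simp
  also have "\<dots> = sylv_t g (Suc (Suc k))" using sylv_t_Suc[of "Suc k" g] by simp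
  finally show ?case .
qed

lemma sum_sylv: "g \<ge> 1 \<Longrightarrow> (\<Sum>i<k. 1 / real (sylv_s g (Suc i))) = 1 / real g - 1 / real (sylv_t g (Suc k))"
proof (induction k)
  case 0 then show ?case by (simp add: sylv_t_def)
next
  case (Suc k)
  have t: "real (sylv_t g (Suc k)) \<ge> 1" using sylv_t_pos[of g "Suc k"] Suc by simp
  have s: "real (sylv_s g (Suc k)) = real (sylv_t g (Suc k)) + 1" using sylv_s_eq Suc by simp
  have t2: "real (sylv_t g (Suc (Suc k))) = real (sylv_s g (Suc k)) * real (sylv_t g (Suc k))"
    using sylv_t_Suc[of "Suc k" g] by simp
  have "1 / real (sylv_t g (Suc k)) - 1 / real (sylv_s g (Suc k)) = 1 / real (sylv_t g (Suc (Suc k)))"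
    using t by (simp add: t2 s field_simps)
  then show ?case using Suc by simp
qed

lemma sylv_t_ge_s: "g \<ge> 1 \<Longrightarrow> k \<ge> 1 \<Longrightarrow> sylv_t g (Suc k) \<ge> sylv_s g k"
  using sylv_t_Suc[of k g] sylv_t_pos[of g k] by simp

lemma sylv_s_mono_Suc: "g \<ge> 1 \<Longrightarrow> k \<ge> 1 \<Longrightarrow> sylv_s g k < sylv_s g (Suc k)"
  using sylv_t_ge_s[of g k] sylv_s_ge2[of g "Suc k"] by (simp add: sylv_t_def)

lemma sylv_s_strict_mono: "g \<ge> 1 \<Longrightarrow> 1 \<le> i \<Longrightarrow> i < j \<Longrightarrow> sylv_s g i < sylv_s g j"
proof (induction j)
  case 0 then show ?case by simp
next
  case (Suc j)
  show ?case
  proof (cases "i < j")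
    case True
    then have "sylv_s g i < sylv_s g j" using Suc by simp
    moreover have "sylv_s g j < sylv_s g (Suc j)" using sylv_s_mono_Suc[of g j] True Suc.prems by simp
    ultimately show ?thesis by simp
  next
    case False
    then have "i = j" using Suc.prems by simp
    then show ?thesis using sylv_s_mono_Suc[of g j] Suc.prems by simp
  qed
qed

lemma abel_aux1:
  fixes u w :: "nat \<Rightarrow> real"
  assumes "\<And>i. i < n \<Longrightarrow> w (Suc i) \<le> w i" "\<And>l. l \<le> n \<Longrightarrow> (\<Sum>i<l. u i) \<ge> 0"
  shows "m \<le> n \<Longrightarrow> (\<Sum>i<m. u i * w i) \<ge> (\<Sum>i<m. u i) * w m"
proof (induction m)
  case 0 then show ?case by simp
next
  case (Suc m)
  have "(\<Sum>i<Suc m. u i * w i) \<ge> (\<Sum>i<m. u i) * w m + u m * w m" using Suc by simp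
  also have "(\<Sum>i<m. u i) * w m + u m * w m = (\<Sum>i<Suc m. u i) * w m" by (simp add: algebra_simps)
  also have "\<dots> \<ge> (\<Sum>i<Suc m. u i) * w (Suc m)"
    using assms(1)[of m] assms(2)[of "Suc m"] Suc.prems by (intro mult_left_mono) auto
  finally show ?case .
qed

lemma abel_nonneg:
  fixes u w :: "nat \<Rightarrow> real"
  assumes "\<And>i. i < n \<Longrightarrow> w (Suc i) \<le> w i" "w n \<ge> 0" "\<And>l. l \<le> n \<Longrightarrow> (\<Sum>i<l. u i) \<ge> 0"
  shows "(\<Sum>i<n. u i * w i) \<ge> 0"
proof -
  have "(\<Sum>i<n. u i * w i) \<ge> (\<Sum>i<n. u i) * w n" using abel_aux1[where n=n and w=w and u=u and m=n] assms(1,3) by blast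
  moreover have "(\<Sum>i<n. u i) * w n \<ge> 0" using assms(2) assms(3)[of n] by simp
  ultimately show ?thesis by linarith
qed

lemma abel_nonneg2:
  fixes u c :: "nat \<Rightarrow> real"
  assumes "\<And>i. Suc i < n \<Longrightarrow> c i \<le> c (Suc i)" "\<And>l. l \<le> n \<Longrightarrow> (\<Sum>i<l. u i) \<le> 0"
    "(\<Sum>i<n. u i) = 0"
  shows "(\<Sum>i<n. u i * c i) \<ge> 0"
proof -
  define w where "w i = (if i < n then - c i else - c (n - 1))" for i
  have "(\<Sum>i<n. (- u i) * w i) \<ge> (\<Sum>i<n. - u i) * w n"
  proof (rule abel_aux1)
    show "w (Suc i) \<le> w i" if "i < n" for i
    proof (cases "Suc i < n")
      case True then show ?thesis using assms(1)[of i] that unfolding w_def by auto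
    next
      case False then have "i = n - 1" using that by simp
      then show ?thesis using that False unfolding w_def by auto
    qed
    show "(\<Sum>i<l. - u i) \<ge> 0" if "l \<le> n" for l using assms(2)[OF that] by (simp add: sum_negf)
  qed simp
  moreover have "(\<Sum>i<n. - u i) = 0" using assms(3) by (simp add: sum_negf)
  moreover have "(\<Sum>i<n. (- u i) * w i) = (\<Sum>i<n. u i * c i)" by (intro sum.cong) (auto simp: w_def)
  ultimately show ?thesis by simp
qed

lemma prod_imp_sum:
  fixes y z :: "nat \<Rightarrow> real"
  assumes ypos: "\<And>i. i < m \<Longrightarrow> 0 < y i" and zpos: "\<And>i. i < m \<Longrightarrow> 0 < z i"
    and ymono: "\<And>i. Suc i < m \<Longrightarrow> y (Suc i) \<le> y i"
    and pr: "\<And>l. l \<le> m \<Longrightarrow> (\<Prod>i<l. y i) \<le> (\<Prod>i<l. z i)"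
  shows "(\<Sum>i<m. y i) \<le> (\<Sum>i<m. z i)"
proof -
  define L where "L i = ln (z i) - ln (y i)" for i
  define w where "w i = (if i < m then y i else 0)" for i
  have key: "z i - y i \<ge> y i * L i" if "i < m" for i
  proof -
    have "ln (z i / y i) \<le> z i / y i - 1" using ypos[OF that] zpos[OF that] by (intro ln_le_minus_one) simp
    then have "y i * ln (z i / y i) \<le> y i * (z i / y i - 1)"
      using ypos[OF that] by (intro mult_left_mono) auto
    moreover have "y i * ln (z i / y i) = y i * L i" using ypos[OF that] zpos[OF that] by (simp add: L_def ln_div)
    moreover have "y i * (z i / y i - 1) = z i - y i" using ypos[OF that] by (simp add: field_simps)
    ultimately show ?thesis by simp
  qed
  have "(\<Sum>i<m. L i * w i) \<ge> 0"
  proof (rule abel_nonneg)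
    show "w (Suc i) \<le> w i" if "i < m" for i using ymono[of i] ypos[OF that] that by (auto simp: w_def)
    show "0 \<le> w m" by (simp add: w_def)
    show "0 \<le> (\<Sum>i<l. L i)" if "l \<le> m" for l
    proof -
      have "(\<Sum>i<l. L i) = ln (\<Prod>i<l. z i) - ln (\<Prod>i<l. y i)"
      proof -
        have "ln (\<Prod>i<l. z i) = (\<Sum>i<l. ln (z i))" using zpos that by (intro ln_prod) (auto, metis less_le_trans less_irrefl)
        moreover have "ln (\<Prod>i<l. y i) = (\<Sum>i<l. ln (y i))" using ypos that by (intro ln_prod) (auto, metis less_le_trans less_irrefl)
        ultimately show ?thesis by (simp add: L_def sum_subtractf)
      qed
      moreover have "ln (\<Prod>i<l. y i) \<le> ln (\<Prod>i<l. z i)"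
      proof -
        have "0 < (\<Prod>i<l. y i)" using that ypos by (intro prod_pos) auto
        moreover have "0 < (\<Prod>i<l. z i)" using that zpos by (intro prod_pos) auto
        ultimately show ?thesis using pr[OF that] by simp
      qed
      ultimately show ?thesis by simp
    qed
  qed
  moreover have "(\<Sum>i<m. L i * w i) = (\<Sum>i<m. y i * L i)" by (intro sum.cong) (auto simp: w_def)
  moreover have "(\<Sum>i<m. y i * L i) \<le> (\<Sum>i<m. z i - y i)" by (intro sum_mono key) simp
  ultimately show ?thesis by (simp add: sum_subtractf)
qed

lemma karamata_ln:
  fixes r \<sigma> :: "nat \<Rightarrow> real"
  assumes rpos: "\<And>i. i < n \<Longrightarrow> 0 < r i" and spos: "\<And>i. i < n \<Longrightarrow> 0 < \<sigma> i"
    and rmono: "\<And>i. Suc i < n \<Longrightarrow> r (Suc i) \<le> r i"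
    and pre: "\<And>k. k \<le> n \<Longrightarrow> (\<Sum>i<k. r i) \<le> (\<Sum>i<k. \<sigma> i)"
    and tot: "(\<Sum>i<n. r i) = (\<Sum>i<n. \<sigma> i)"
  shows "(\<Prod>i<n. \<sigma> i) \<le> (\<Prod>i<n. r i)"
    and "(\<Prod>i<n. \<sigma> i) = (\<Prod>i<n. r i) \<Longrightarrow> \<forall>i<n. r i = \<sigma> i"
proof -
  define e where "e i = ln (r i) - ln (\<sigma> i) - (r i - \<sigma> i) * (1 / r i)" for i
  have e0: "e i \<ge> 0" if "i < n" for i
  proof -
    have "ln (\<sigma> i / r i) \<le> \<sigma> i / r i - 1" using rpos[OF that] spos[OF that] by (intro ln_le_minus_one) simp
    then show ?thesis using rpos[OF that] spos[OF that] by (simp add: e_def ln_div field_simps)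
  qed
  have S: "(\<Sum>i<n. (r i - \<sigma> i) * (1 / r i)) \<ge> 0"
  proof (rule abel_nonneg2)
    show "1 / r i \<le> 1 / r (Suc i)" if "Suc i < n" for i
      using rmono[OF that] rpos[OF that] by (intro divide_left_mono) auto
    show "(\<Sum>i<l. r i - \<sigma> i) \<le> 0" if "l \<le> n" for l using pre[OF that] by (simp add: sum_subtractf)
    show "(\<Sum>i<n. r i - \<sigma> i) = 0" using tot by (simp add: sum_subtractf)
  qed
  have decomp: "ln (\<Prod>i<n. r i) - ln (\<Prod>i<n. \<sigma> i) = (\<Sum>i<n. e i) + (\<Sum>i<n. (r i - \<sigma> i) * (1 / r i))"
  proof -
    have "ln (\<Prod>i<n. r i) = (\<Sum>i<n. ln (r i))" using rpos by (intro ln_prod) (auto dest: less_imp_neq[symmetric])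
    moreover have "ln (\<Prod>i<n. \<sigma> i) = (\<Sum>i<n. ln (\<sigma> i))" using spos by (intro ln_prod) (auto dest: less_imp_neq[symmetric])
    moreover have "(\<Sum>i<n. e i) = (\<Sum>i<n. ln (r i)) - (\<Sum>i<n. ln (\<sigma> i)) - (\<Sum>i<n. (r i - \<sigma> i) * (1 / r i))"
      by (simp add: e_def sum_subtractf)
    ultimately show ?thesis by simp
  qed
  have E: "(\<Sum>i<n. e i) \<ge> 0" using e0 by (intro sum_nonneg) auto
  have pp: "0 < (\<Prod>i<n. r i)" "0 < (\<Prod>i<n. \<sigma> i)" using rpos spos by (auto intro!: prod_pos)
  show "(\<Prod>i<n. \<sigma> i) \<le> (\<Prod>i<n. r i)"
  proof -
    have "ln (\<Prod>i<n. \<sigma> i) \<le> ln (\<Prod>i<n. r i)" using decomp E S by linarith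
    then show ?thesis using pp by simp
  qed
  assume eq: "(\<Prod>i<n. \<sigma> i) = (\<Prod>i<n. r i)"
  then have "(\<Sum>i<n. e i) = 0" using decomp E S by simp
  then have ez: "\<forall>i\<in>{..<n}. e i = 0" using e0 by (subst sum_nonneg_eq_0_iff[symmetric]) auto
  show "\<forall>i<n. r i = \<sigma> i"
  proof (intro allI impI)
    fix i assume i: "i < n"
    have "ln (\<sigma> i / r i) = \<sigma> i / r i - 1"
      using ez i rpos[OF i] spos[OF i] by (simp add: e_def ln_div field_simps)
    then have "\<sigma> i / r i = 1" using rpos[OF i] spos[OF i] by (intro ln_eq_minus_one) auto
    then show "r i = \<sigma> i" using rpos[OF i] by simp
  qed
qed


lemma sum_split_add: fixes a b :: nat shows "(\<Sum>i<a+b. f i) = (\<Sum>i<a. f i) + (\<Sum>i<b. f (a+i))"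
  by (induction b) (auto simp: add.assoc)

lemma prod_split_add: fixes a b :: nat shows "(\<Prod>i<a+b. f i) = (\<Prod>i<a. f i) * (\<Prod>i<b. f (a+i))"
  by (induction b) (auto simp: mult.assoc)


lemma head_bound:
  fixes x :: "nat \<Rightarrow> nat"
  assumes xpos: "\<And>i. i<J \<Longrightarrow> x i > 0" and g: "g \<ge> 1"
    and lt: "(\<Sum>i<J. 1/real (x i)) < 1/real g"
  shows "(\<Sum>i<J. 1/real (x i)) \<le> 1/real g - 1/(real g * real (\<Prod>i<J. x i))"
proof -
  define A where "A = (\<Prod>i<J. x i)"
  define N where "N = (\<Sum>i<J. \<Prod>j\<in>{..<J}-{i}. x j)"
  have Apos: "A > 0" unfolding A_def using xpos by (intro prod_pos) auto
  have each: "1 / real (x i) = real (\<Prod>j\<in>{..<J}-{i}. x j) / real A" if "i < J" for i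
  proof -
    have "A = x i * (\<Prod>j\<in>{..<J}-{i}. x j)" unfolding A_def using that by (subst prod.remove) auto
    then show ?thesis using xpos[OF that] Apos by (simp add: field_simps)
  qed
  have eq: "(\<Sum>i<J. 1/real (x i)) = real N / real A"
  proof -
    have "(\<Sum>i<J. 1/real (x i)) = (\<Sum>i<J. real (\<Prod>j\<in>{..<J}-{i}. x j) / real A)"
      using each by (intro sum.cong) auto
    also have "\<dots> = real N / real A" by (simp add: N_def sum_divide_distrib)
    finally show ?thesis .
  qed
  have "real N / real A < 1 / real g" using lt eq by simp
  then have "real N * real g < real A" using Apos g by (simp add: field_simps)
  then have "N * g < A" by (metis of_nat_less_iff of_nat_mult)
  then have "N * g + 1 \<le> A" by simp
  then have "real N * real g \<le> real A - 1" by (metis of_nat_1 of_nat_add of_nat_le_iff of_nat_mult le_diff_eq)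
  then have "real N / real A \<le> 1/real g - 1/(real g * real A)" using Apos g by (simp add: field_simps)
  then show ?thesis using eq by (simp add: A_def)
qed


lemma curtiss:
  fixes x :: "nat \<Rightarrow> nat"
  assumes g: "g \<ge> 1" and xpos: "\<And>i. i<k \<Longrightarrow> x i > 0"
    and mono: "\<And>i j. i \<le> j \<Longrightarrow> j < k \<Longrightarrow> x i \<le> x j"
    and lt: "(\<Sum>i<k. 1/real (x i)) < 1/real g"
  shows "(\<Sum>i<k. 1/real (x i)) \<le> 1/real g - 1/real (sylv_t g (Suc k))"
proof -
  define A where "A j = (\<Prod>i<j. x i)" for j
  define P where "P j = (\<Prod>i<j. sylv_s g (Suc i))" for j
  define Js where "Js = {j. j \<le> k \<and> A j \<le> P j}"
  define J where "J = Max Js"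
  have finJs: "finite Js" unfolding Js_def by simp
  have "0 \<in> Js" unfolding Js_def A_def P_def by simp
  then have "J \<in> Js" unfolding J_def using finJs by (intro Max_in) auto
  then have Jk: "J \<le> k" and AP: "A J \<le> P J" unfolding Js_def by auto
  have after: "P j < A j" if "J < j" "j \<le> k" for j
  proof (rule ccontr)
    assume "\<not> P j < A j"
    then have "j \<in> Js" using that unfolding Js_def by auto
    then have "j \<le> J" unfolding J_def using finJs by (intro Max_ge) auto
    then show False using that by simp
  qed
  have Apos: "A j > 0" if "j \<le> k" for j unfolding A_def using xpos that by (intro prod_pos) auto
  have Ppos: "P j > 0" for j 
  proof -
    have "0 < sylv_s g (Suc i)" for i using sylv_s_ge2[OF g, of "Suc i"] by simp
    then show ?thesis unfolding P_def by (intro prod_pos) auto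
  qed
  have tP: "real (sylv_t g (Suc j)) = real g * real (P j)" for j
    using prod_sylv[of g j] unfolding P_def by (metis of_nat_mult)
  define b where "b = k - J"
  have kJb: "k = J + b" using Jk b_def by simp
  have nonneg: "(\<Sum>i<b. 1/real (x (J+i))) \<ge> 0" by (intro sum_nonneg) auto
  have split: "(\<Sum>i<k. 1/real (x i)) = (\<Sum>i<J. 1/real (x i)) + (\<Sum>i<b. 1/real (x (J+i)))"
    unfolding kJb by (rule sum_split_add)
  have hlt: "(\<Sum>i<J. 1/real (x i)) < 1/real g" using split nonneg lt by linarith
  have head: "(\<Sum>i<J. 1/real (x i)) \<le> 1/real g - 1/(real g * real (A J))"
    unfolding A_def by (rule head_bound) (use xpos Jk hlt g in auto)
  have APr: "real (A J) \<le> real (P J)" using AP by simp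
  have Apr: "real (A J) > 0" using Apos[OF Jk] by simp
  have Ppr: "real (P J) > 0" using Ppos by simp
  have hb2: "1/(real g * real (P J)) \<le> 1/(real g * real (A J))"
  proof -
    have "real g * real (A J) \<le> real g * real (P J)" using APr by (intro mult_left_mono) auto
    moreover have "0 < real g * real (A J)" using Apr g by simp
    ultimately show ?thesis by (intro divide_left_mono) auto
  qed
  have sylsplit: "1/real g - 1/real (sylv_t g (Suc k)) = 1/real g - 1/real (sylv_t g (Suc J)) + (\<Sum>i<b. 1/real (sylv_s g (Suc (J+i))))"
  proof -
    have "1/real g - 1/real (sylv_t g (Suc k)) = (\<Sum>i<k. 1 / real (sylv_s g (Suc i)))" using sum_sylv[OF g] by simp
    also have "\<dots> = (\<Sum>i<J. 1 / real (sylv_s g (Suc i))) + (\<Sum>i<b. 1/real (sylv_s g (Suc (J+i))))"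
      unfolding kJb by (rule sum_split_add)
    finally show ?thesis using sum_sylv[OF g, of J] by simp
  qed
  show ?thesis
  proof (cases "b = 0")
    case True
    then show ?thesis using split head hb2 sylsplit tP[of J] by simp
  next
    case False
    define \<rho> where "\<rho> = real (A J) / real (P J)"
    have rho: "0 < \<rho>" "\<rho> \<le> 1" unfolding \<rho>_def using APr Apr Ppr by auto
    define c where "c i = (if i = 0 then \<rho> else 1)" for i :: nat
    define y where "y i = 1 / real (x (J+i))" for i
    define z where "z i = c i * (1 / real (sylv_s g (Suc (J+i))))" for i
    have spos: "real (sylv_s g (Suc j)) > 0" for j using sylv_s_ge2[OF g, of "Suc j"] by simp
    have "(\<Sum>i<b. y i) \<le> (\<Sum>i<b. z i)"
    proof (rule prod_imp_sum)
      show "0 < y i" if "i < b" for i using xpos[of "J+i"] that kJb by (simp add: y_def)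
      show "0 < z i" if "i < b" for i using rho spos[of "J+i"] by (simp add: z_def c_def)
      show "y (Suc i) \<le> y i" if "Suc i < b" for i
      proof -
        have "x (J+i) \<le> x (J + Suc i)" using mono[of "J+i" "J + Suc i"] that kJb by simp
        moreover have "0 < x (J+i)" using xpos[of "J+i"] that kJb by simp
        ultimately have "real (x (J+i)) \<le> real (x (J + Suc i))" "0 < real (x (J+i))" by auto
        then show ?thesis unfolding y_def by (intro divide_left_mono) auto
      qed
      show "(\<Prod>i<l. y i) \<le> (\<Prod>i<l. z i)" if "l \<le> b" for l
      proof (cases "l = 0")
        case True then show ?thesis by simp
      next
        case False
        have Al: "A (J+l) = A J * (\<Prod>i<l. x (J+i))" unfolding A_def by (rule prod_split_add)
        have Pl: "P (J+l) = P J * (\<Prod>i<l. sylv_s g (Suc (J+i)))" unfolding P_def by (rule prod_split_add)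
        have cprod: "(\<Prod>i<l. c i) = \<rho>" using False unfolding c_def by (subst prod.delta) auto
        have py: "(\<Prod>i<l. y i) = real (A J) / real (A (J+l))"
          using Al Apr by (simp add: y_def prod_dividef)
        have pz: "(\<Prod>i<l. z i) = real (A J) / real (P (J+l))"
          using Pl Ppr cprod by (simp add: z_def prod.distrib prod_dividef \<rho>_def)
        have "P (J+l) < A (J+l)" using after[of "J+l"] False that kJb by simp
        then have "real (P (J+l)) \<le> real (A (J+l))" by simp
        moreover have "real (P (J+l)) > 0" using Ppos by simp
        ultimately show ?thesis unfolding py pz using Apr by (intro divide_left_mono) auto
      qed
    qed
    moreover have "(\<Sum>i<b. z i) = (\<Sum>i<b. 1 / real (sylv_s g (Suc (J+i)))) + (\<rho> - 1) / real (sylv_s g (Suc J))"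
    proof -
      have "(\<Sum>i<b. z i) = (\<Sum>i<b. 1 / real (sylv_s g (Suc (J+i))) + (if i = 0 then (\<rho> - 1) / real (sylv_s g (Suc J)) else 0))"
        by (intro sum.cong) (auto simp: z_def c_def diff_divide_distrib)
      also have "\<dots> = (\<Sum>i<b. 1 / real (sylv_s g (Suc (J+i)))) + (\<rho> - 1) / real (sylv_s g (Suc J))"
        using False by (simp add: sum.distrib sum.delta)
      finally show ?thesis .
    qed
    moreover have "(\<rho> - 1) / real (sylv_s g (Suc J)) \<le> 0" using rho spos[of J] by (simp add: divide_nonpos_pos)
    ultimately have tail: "(\<Sum>i<b. y i) \<le> (\<Sum>i<b. 1 / real (sylv_s g (Suc (J+i))))" by linarith
    show ?thesis using split head hb2 sylsplit tP[of J] tail by (simp add: y_def)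
  qed
qed


lemma egyptian:
  fixes x :: "nat \<Rightarrow> nat"
  assumes g: "g \<ge> 1" and n: "n \<ge> 1" and xpos: "\<And>i. i<n \<Longrightarrow> x i > 0"
    and mono: "\<And>i j. i \<le> j \<Longrightarrow> j < n \<Longrightarrow> x i \<le> x j"
    and sm: "(\<Sum>i<n. 1/real (x i)) = 1/real g"
  shows "real (\<Prod>i<n. x i) \<le> real (sylv_t g n)^2 / real g"
    and "real (\<Prod>i<n. x i) = real (sylv_t g n)^2 / real g \<Longrightarrow>
           (\<forall>i<n-1. x i = sylv_s g (Suc i)) \<and> x (n-1) = sylv_t g n"
proof -
  define r where "r i = 1 / real (x i)" for i
  define \<sigma> where "\<sigma> i = (if i < n - 1 then 1 / real (sylv_s g (Suc i)) else 1 / real (sylv_t g n))" for i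
  have spos: "real (sylv_s g (Suc j)) > 0" for j using sylv_s_ge2[OF g, of "Suc j"] by simp
  have tpos: "real (sylv_t g n) > 0" using sylv_t_pos[OF g n] by simp
  have nn: "n = (n - 1) + 1" using n by simp
  have sig_sum: "(\<Sum>i<n. \<sigma> i) = 1 / real g"
  proof -
    have "(\<Sum>i<n. \<sigma> i) = (\<Sum>i<n-1. \<sigma> i) + \<sigma> (n-1)" using nn by (metis sum.lessThan_Suc Suc_eq_plus1)
    also have "(\<Sum>i<n-1. \<sigma> i) = (\<Sum>i<n-1. 1 / real (sylv_s g (Suc i)))" by (intro sum.cong) (auto simp: \<sigma>_def)
    also have "\<dots> = 1 / real g - 1 / real (sylv_t g n)" using sum_sylv[OF g, of "n-1"] nn by simp
    finally show ?thesis by (simp add: \<sigma>_def)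
  qed
  have K: "(\<Prod>i<n. \<sigma> i) \<le> (\<Prod>i<n. r i)" "(\<Prod>i<n. \<sigma> i) = (\<Prod>i<n. r i) \<Longrightarrow> \<forall>i<n. r i = \<sigma> i"
  proof -
    have rpos: "\<And>i. i < n \<Longrightarrow> 0 < r i" using xpos by (simp add: r_def)
    have sgpos: "\<And>i. i < n \<Longrightarrow> 0 < \<sigma> i" using spos tpos by (simp add: \<sigma>_def)
    have rmono: "r (Suc i) \<le> r i" if "Suc i < n" for i
    proof -
      have "real (x i) \<le> real (x (Suc i))" "0 < real (x i)" using mono[of i "Suc i"] xpos[of i] that by auto
      then show ?thesis unfolding r_def by (intro divide_left_mono) auto
    qed
    have pre: "(\<Sum>i<k. r i) \<le> (\<Sum>i<k. \<sigma> i)" if "k \<le> n" for k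
    proof (cases "k = n")
      case True then show ?thesis using sm sig_sum by (simp add: r_def)
    next
      case False
      then have kn: "k < n" using that by simp
      have "(\<Sum>i<n. r i) = (\<Sum>i<k. r i) + (\<Sum>i<n-k. r (k+i))" using sum_split_add[of r k "n-k"] kn by simp
      moreover have "(\<Sum>i<n-k. r (k+i)) > 0" using kn rpos by (intro sum_pos) (auto simp: lessThan_empty_iff)
      ultimately have "(\<Sum>i<k. 1/real (x i)) < 1/real g" using sm by (simp add: r_def)
      then have "(\<Sum>i<k. 1/real (x i)) \<le> 1/real g - 1/real (sylv_t g (Suc k))"
        by (intro curtiss g) (use xpos mono kn in auto)
      also have "\<dots> = (\<Sum>i<k. 1 / real (sylv_s g (Suc i)))" using sum_sylv[OF g] by simp
      also have "\<dots> = (\<Sum>i<k. \<sigma> i)" using kn by (intro sum.cong) (auto simp: \<sigma>_def)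
      finally show ?thesis by (simp add: r_def)
    qed
    have tot: "(\<Sum>i<n. r i) = (\<Sum>i<n. \<sigma> i)" using sm sig_sum by (simp add: r_def)
    show "(\<Prod>i<n. \<sigma> i) \<le> (\<Prod>i<n. r i)" using karamata_ln(1)[OF rpos sgpos rmono pre tot] by blast
    show "(\<Prod>i<n. \<sigma> i) = (\<Prod>i<n. r i) \<Longrightarrow> \<forall>i<n. r i = \<sigma> i" using karamata_ln(2)[OF rpos sgpos rmono pre tot] by blast
  qed
  have psig: "(\<Prod>i<n. \<sigma> i) = real g / (real (sylv_t g n) * real (sylv_t g n))"
  proof -
    have "(\<Prod>i<n. \<sigma> i) = (\<Prod>i<n-1. \<sigma> i) * \<sigma> (n-1)" using nn by (metis prod.lessThan_Suc Suc_eq_plus1)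
    also have "(\<Prod>i<n-1. \<sigma> i) = (\<Prod>i<n-1. 1 / real (sylv_s g (Suc i)))" by (intro prod.cong) (auto simp: \<sigma>_def)
    also have "\<dots> = 1 / real (\<Prod>i<n-1. sylv_s g (Suc i))" by (simp add: prod_dividef)
    also have "real (\<Prod>i<n-1. sylv_s g (Suc i)) = real (sylv_t g n) / real g"
    proof -
      have "real g * real (\<Prod>i<n-1. sylv_s g (Suc i)) = real (sylv_t g n)"
        using prod_sylv[of g "n-1"] nn by (metis of_nat_mult Suc_eq_plus1)
      then show ?thesis using g by (simp add: field_simps)
    qed
    finally show ?thesis using g by (simp add: \<sigma>_def)
  qed
  have Xpos: "real (\<Prod>i<n. x i) > 0" using xpos by (simp del: of_nat_prod add: prod_pos)
  have pr: "(\<Prod>i<n. r i) = 1 / real (\<Prod>i<n. x i)" by (simp add: r_def prod_dividef)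
  show le: "real (\<Prod>i<n. x i) \<le> real (sylv_t g n)^2 / real g"
  proof -
    have "real g / (real (sylv_t g n) * real (sylv_t g n)) \<le> 1 / real (\<Prod>i<n. x i)" using K(1) psig pr by simp
    then show ?thesis using Xpos tpos g by (simp add: field_simps power2_eq_square)
  qed
  assume eq: "real (\<Prod>i<n. x i) = real (sylv_t g n)^2 / real g"
  then have "real (\<Prod>i<n. x i) = real (sylv_t g n) * real (sylv_t g n) / real g"
    by (simp add: power2_eq_square del: of_nat_prod)
  then have "1 / real (\<Prod>i<n. x i) = real g / (real (sylv_t g n) * real (sylv_t g n))"
    using g tpos by (simp del: of_nat_prod)
  then have "(\<Prod>i<n. \<sigma> i) = (\<Prod>i<n. r i)" using psig pr by simp
  then have rs: "\<forall>i<n. r i = \<sigma> i" using K(2) by blast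
  show "(\<forall>i<n-1. x i = sylv_s g (Suc i)) \<and> x (n-1) = sylv_t g n"
  proof (intro conjI allI impI)
    fix i assume "i < n - 1"
    then have "1 / real (x i) = 1 / real (sylv_s g (Suc i))" using rs by (auto simp: r_def \<sigma>_def)
    then show "x i = sylv_s g (Suc i)" by simp
  next
    have "1 / real (x (n-1)) = 1 / real (sylv_t g n)" using rs n by (auto simp: r_def \<sigma>_def)
    then show "x (n-1) = sylv_t g n" by simp
  qed
qed


proposition
 fixes f :: "real^'n::finite \<Rightarrow> real^'n::_"
  assumes "linear f" "S \<in> lmeasurable"
  shows measurable_linear_image_fin: "(f ` S) \<in> lmeasurable"
    and measure_linear_image_fin: "measure lebesgue (f ` S) = \<bar>det (matrix f)\<bar> * measure lebesgue S" (is "?Q f S")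
proof -
  have "\<forall>S \<in> lmeasurable. (f ` S) \<in> lmeasurable \<and> ?Q f S"
  proof (rule induct_linear_elementary [OF \<open>linear f\<close>]; intro ballI)
    fix f g and S :: "(real,'n) vec set"
    assume "linear f" and "linear g"
      and f [rule_format]: "\<forall>S \<in> lmeasurable. f ` S \<in> lmeasurable \<and> ?Q f S"
      and g [rule_format]: "\<forall>S \<in> lmeasurable. g ` S \<in> lmeasurable \<and> ?Q g S"
      and S: "S \<in> lmeasurable"
    then have gS: "g ` S \<in> lmeasurable"
      by blast
    show "(f \<circ> g) ` S \<in> lmeasurable \<and> ?Q (f \<circ> g) S"
      using f [OF gS] g [OF S] matrix_compose [OF \<open>linear g\<close> \<open>linear f\<close>]
      by (simp add: o_def image_comp abs_mult det_mul)
  next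
    fix f :: "real^'n::_ \<Rightarrow> real^'n::_" and i and S :: "(real^'n::_) set"
    assume "linear f" and 0: "\<And>x. f x $ i = 0" and "S \<in> lmeasurable"
    then have "\<not> inj f"
      by (metis (full_types) linear_injective_imp_surjective one_neq_zero surjE vec_component)
    have detf: "det (matrix f) = 0"
      using \<open>\<not> inj f\<close> det_nz_iff_inj[OF \<open>linear f\<close>] by blast
    show "f ` S \<in> lmeasurable \<and> ?Q f S"
    proof
      show "f ` S \<in> lmeasurable"
        using lmeasurable_iff_indicator_has_integral \<open>linear f\<close> \<open>\<not> inj f\<close> negligible_UNIV negligible_linear_singular_image by blast
      have "measure lebesgue (f ` S) = 0"
        by (meson \<open>\<not> inj f\<close> \<open>linear f\<close> negligible_imp_measure0 negligible_linear_singular_image)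
      also have "\<dots> = \<bar>det (matrix f)\<bar> * measure lebesgue S"
        by (simp add: detf)
      finally show "?Q f S" .
    qed
  next
    fix c and S :: "(real^'n::_) set"
    assume "S \<in> lmeasurable"
    show "(\<lambda>a. \<chi> i. c i * a $ i) ` S \<in> lmeasurable \<and> ?Q (\<lambda>a. \<chi> i. c i * a $ i) S"
    proof
      show "(\<lambda>a. \<chi> i. c i * a $ i) ` S \<in> lmeasurable"
        by (simp add: \<open>S \<in> lmeasurable\<close> measurable_stretch)
      show "?Q (\<lambda>a. \<chi> i. c i * a $ i) S"
        by (simp add: measure_stretch [OF \<open>S \<in> lmeasurable\<close>, of c] axis_def matrix_def det_diagonal)
    qed
  next
    fix m :: "'n" and n :: "'n" and S :: "(real, 'n) vec set"
    assume "m \<noteq> n" and "S \<in> lmeasurable"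
    let ?h = "\<lambda>v::(real, 'n) vec. \<chi> i. v $ Transposition.transpose m n i"
    have lin: "linear ?h"
      by (rule linearI) (simp_all add: plus_vec_def scaleR_vec_def)
    have meq: "measure lebesgue ((\<lambda>v::(real, 'n) vec. \<chi> i. v $ Transposition.transpose m n i) ` cbox a b)
             = measure lebesgue (cbox a b)" for a b
    proof (cases "cbox a b = {}")
      case True then show ?thesis
        by simp
    next
      case False
      then have him: "?h ` (cbox a b) \<noteq> {}"
        by blast
      have eq: "?h ` (cbox a b) = cbox (?h a) (?h b)"
        by (auto simp: image_iff lambda_swap_Galois mem_box_cart) (metis transpose_involutory)+
      show ?thesis
        using him prod.permute [OF permutes_swap_id, where S=UNIV and g="\<lambda>i. (b - a)$i", symmetric]
        by (simp add: eq content_cbox_cart False)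
    qed
    have "(\<chi> i j. if Transposition.transpose m n i = j then 1 else 0) = (\<chi> i j. if j = Transposition.transpose m n i then 1 else (0::real))"
      by (auto intro!: Cart_lambda_cong)
    then have "matrix ?h = transpose(\<chi> i j. mat 1 $ i $ Transposition.transpose m n j)"
      by (auto simp: matrix_eq transpose_def axis_def mat_def matrix_def)
    then have 1: "\<bar>det (matrix ?h)\<bar> = 1"
      by (simp add: det_permute_columns permutes_swap_id sign_swap_id abs_mult)
    show "?h ` S \<in> lmeasurable \<and> ?Q ?h S"
      using measure_linear_sufficient [OF lin \<open>S \<in> lmeasurable\<close>] meq 1 by force
  next
    fix m n :: "'n" and S :: "(real, 'n) vec set"
    assume "m \<noteq> n" and "S \<in> lmeasurable"
    let ?h = "\<lambda>v::(real, 'n) vec. \<chi> i. if i = m then v $ m + v $ n else v $ i"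
    have lin: "linear ?h"
      by (rule linearI) (auto simp: algebra_simps plus_vec_def scaleR_vec_def vec_eq_iff)
    have 1: "det(matrix ?h) = 1"
    proof -
      have "matrix ?h = (\<chi> k. if k = m then row m (mat 1) + 1 *s row n (mat 1) else row k (mat 1 :: real^'n^'n))"
        using \<open>m \<noteq> n\<close> by (auto simp: matrix_def vec_eq_iff row_def mat_def axis_def)
      then show ?thesis using det_row_operation[OF \<open>m \<noteq> n\<close>, of "mat 1" 1] by simp
    qed
    have meq: "measure lebesgue (?h ` (cbox a b)) = measure lebesgue (cbox a b)" for a b
    proof (cases "cbox a b = {}")
      case True then show ?thesis by simp
    next
      case False
      then have ne: "(+) (\<chi> i. if i = n then - a $ n else 0) ` cbox a b \<noteq> {}"
        by auto
      let ?v = "\<chi> i. if i = n then - a $ n else 0"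
      have "?h ` cbox a b
            = (+) (\<chi> i. if i = m \<or> i = n then a $ n else 0) ` ?h ` (+) ?v ` (cbox a b)"
        using \<open>m \<noteq> n\<close> unfolding image_comp o_def by (force simp: vec_eq_iff)
      then have "measure lebesgue (?h ` (cbox a b))
               = measure lebesgue ((\<lambda>v. \<chi> i. if i = m then v $ m + v $ n else v $ i) `
                                   (+) ?v ` cbox a b)"
        by (rule ssubst) (rule measure_translation)
      also have "\<dots> = measure lebesgue ((\<lambda>v. \<chi> i. if i = m then v $ m + v $ n else v $ i) ` cbox (?v +a) (?v + b))"
        by (metis (no_types, lifting) cbox_translation)
      also have "\<dots> = measure lebesgue ((+) ?v ` cbox a b)"
        apply (subst measure_shear_interval)
        using \<open>m \<noteq> n\<close> ne apply auto
        apply (simp add: cbox_translation)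
        by (metis cbox_borel cbox_translation measure_completion sets_lborel)
      also have "\<dots> = measure lebesgue (cbox a b)"
        by (rule measure_translation)
        finally show ?thesis .
      qed
    show "?h ` S \<in> lmeasurable \<and> ?Q ?h S"
      using measure_linear_sufficient [OF lin \<open>S \<in> lmeasurable\<close>] meq 1 by force
  qed
  with assms show "(f ` S) \<in> lmeasurable" "?Q f S"
    by metis+
qed


definition AS :: "real^'n \<Rightarrow> 'n set \<Rightarrow> real^'n^'n" where
  "AS q S = (\<chi> i j. (if i = j then 1 else 0) + (if j \<in> S then q$i else 0))"

lemma det_AS:
  fixes q :: "real^'n"
  assumes q: "\<And>i. q$i \<ge> 0" and fin: "finite S"
  shows "det (AS q S) = 1 + sum (\<lambda>i. q$i) S"
  using fin
proof (induction S rule: finite_induct)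
  case empty
  have "AS q {} = mat 1" by (simp add: AS_def mat_def vec_eq_iff)
  then show ?case by simp
next
  case (insert k S)
  define \<sigma> where "\<sigma> = sum (\<lambda>i. q$i) S"
  have sig: "\<sigma> \<ge> 0" unfolding \<sigma>_def using q by (intro sum_nonneg) auto
  define x where "x = axis k 1 + (1/(1+\<sigma>)) *\<^sub>R q"
  have sx: "(\<Sum>j\<in>S. x$j) = \<sigma>/(1+\<sigma>)"
  proof -
    have "(\<Sum>j\<in>S. x$j) = (\<Sum>j\<in>S. q$j/(1+\<sigma>))"
      using insert.hyps by (intro sum.cong) (auto simp: x_def axis_def)
    also have "\<dots> = \<sigma>/(1+\<sigma>)" by (simp add: \<sigma>_def sum_divide_distrib)
    finally show ?thesis .
  qed
  have mv: "(AS q S *v x)$i = (if i = k then 1 else 0) + q$i" for i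
  proof -
    have "(AS q S *v x)$i = (\<Sum>j\<in>UNIV. ((if i = j then 1 else 0) + (if j \<in> S then q$i else 0)) * x$j)"
      by (simp add: AS_def matrix_vector_mult_def)
    also have "\<dots> = (\<Sum>j\<in>UNIV. (if i = j then x$j else 0)) + (\<Sum>j\<in>UNIV. (if j \<in> S then q$i * x$j else 0))"
      by (subst sum.distrib[symmetric]) (intro sum.cong, auto simp: algebra_simps)
    also have "(\<Sum>j\<in>UNIV. (if i = j then x$j else 0)) = x$i" by simp
    also have "(\<Sum>j\<in>UNIV. (if j \<in> S then q$i * x$j else 0)) = (\<Sum>j\<in>S. q$i * x$j)"
      by (simp add: sum.If_cases Int_def)
    also have "\<dots> = q$i * (\<sigma>/(1+\<sigma>))" by (simp add: sum_distrib_left[symmetric] sx)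
    finally have "(AS q S *v x)$i = x$i + q$i * (\<sigma>/(1+\<sigma>))" .
    moreover have "x$i = (if i = k then 1 else 0) + q$i/(1+\<sigma>)" by (simp add: x_def axis_def)
    moreover have "q$i/(1+\<sigma>) + q$i * (\<sigma>/(1+\<sigma>)) = q$i"
    proof -
      have ne: "1+\<sigma> \<noteq> 0" using sig by simp
      have "q$i/(1+\<sigma>) + q$i * (\<sigma>/(1+\<sigma>)) = (q$i * (1+\<sigma>))/(1+\<sigma>)"
        by (simp add: add_divide_distrib algebra_simps)
      also have "\<dots> = q$i" using ne by simp
      finally show ?thesis .
    qed
    ultimately show ?thesis by simp
  qed
  have eq: "AS q (insert k S) = (\<chi> i j. if j = k then (AS q S *v x)$i else AS q S $i$j)"
  proof -
    have "AS q (insert k S) $ i $ j = (if j = k then (AS q S *v x)$i else AS q S $i$j)" for i j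
      using insert.hyps by (cases "j = k") (simp_all only: mv if_True if_False, simp_all add: AS_def)
    then show ?thesis by (simp add: vec_eq_iff)
  qed
  have xk: "x$k = 1 + q$k/(1+\<sigma>)" by (simp add: x_def)
  have "det (AS q (insert k S)) = x$k * det (AS q S)"
    unfolding eq by (rule cramer_lemma)
  also have "\<dots> = (1 + q$k/(1+\<sigma>)) * (1 + \<sigma>)" using insert.IH xk by (simp add: \<sigma>_def)
  also have "\<dots> = 1 + sum (\<lambda>i. q$i) (insert k S)" using sig insert.hyps by (simp add: field_simps \<sigma>_def)
  finally show ?case .
qed

lemma Basis_cart_real: "(Basis :: (real^'n) set) = range (\<lambda>i. axis i 1)"
  by (auto simp: Basis_vec_def)

lemma measure_std_simplex:
  "measure lebesgue (convex hull (insert 0 Basis) :: (real^'n) set) = 1 / fact CARD('n)"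
proof -
  have compact: "compact (convex hull (insert 0 Basis) :: (real^'n) set)"
    by (intro finite_imp_compact_convex_hull) auto
  then have "measure lebesgue (convex hull (insert 0 Basis) :: (real^'n) set) = Henstock_Kurzweil_Integration.content (convex hull (insert 0 Basis) :: (real^'n) set)"
    by (intro measure_completion) (auto dest: compact_imp_closed)
  also have "\<dots> = 1 / fact CARD('n)" by (simp add: content_std_simplex)
  finally show ?thesis .
qed

definition simp0 :: "real^'n \<Rightarrow> (real^'n) set" where
  "simp0 q = convex hull (range (\<lambda>i. axis i (1::real)) \<union> {-q})"

lemma simp0_image:
  fixes q :: "real^'n"
  shows "simp0 q = (+) (-q) ` ((\<lambda>x. AS q UNIV *v x) ` (convex hull (insert 0 Basis)))"
proof -
  have lin: "linear (\<lambda>x. AS q UNIV *v x)" by (rule matrix_vector_mul_linear)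
  have col: "AS q UNIV *v axis i 1 = axis i 1 + q" for i
    by (simp add: vec_eq_iff AS_def matrix_vector_mult_def axis_def if_distrib cong: if_cong)
  have "(+) (-q) ` ((\<lambda>x. AS q UNIV *v x) ` (convex hull (insert 0 Basis)))
      = convex hull ((+) (-q) ` ((\<lambda>x. AS q UNIV *v x) ` insert 0 Basis))"
    unfolding convex_hull_linear_image[OF lin] convex_hull_translation ..
  also have "(+) (-q) ` ((\<lambda>x. AS q UNIV *v x) ` insert 0 Basis) = range (\<lambda>i. axis i (1::real)) \<union> {-q}"
    by (auto simp: Basis_cart_real image_image col)
  finally show ?thesis by (simp add: simp0_def)
qed

lemma measure_simp0:
  fixes q :: "real^'n"
  assumes q: "\<And>i. q$i \<ge> 0"
  shows "measure lebesgue (simp0 q) = (1 + sum (\<lambda>i. q$i) UNIV) / fact CARD('n)"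
proof -
  have lin: "linear (\<lambda>x. AS q UNIV *v x)" by (rule matrix_vector_mul_linear)
  have meas: "(convex hull (insert 0 Basis) :: (real^'n) set) \<in> lmeasurable"
    by (intro lmeasurable_compact finite_imp_compact_convex_hull) auto
  have "measure lebesgue (simp0 q) = measure lebesgue ((\<lambda>x. AS q UNIV *v x) ` (convex hull (insert 0 Basis)))"
    unfolding simp0_image by (rule measure_translation)
  also have "\<dots> = \<bar>det (AS q UNIV)\<bar> * measure lebesgue (convex hull (insert 0 Basis) :: (real^'n) set)"
    using measure_linear_image_fin[OF lin meas] by (simp add: matrix_of_matrix_vector_mul)
  also have "det (AS q UNIV) = 1 + sum (\<lambda>i. q$i) UNIV" by (rule det_AS[OF q]) simp
  also have "\<bar>1 + sum (\<lambda>i. q$i) UNIV\<bar> = 1 + sum (\<lambda>i. q$i) UNIV"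
    using q by (intro abs_of_nonneg add_nonneg_nonneg sum_nonneg) auto
  finally show ?thesis by (simp add: measure_std_simplex)
qed


lemma polar_dual_hull: "polar_dual (convex hull X) = {u. \<forall>v\<in>X. inner u v \<ge> -1}"
proof
  show "polar_dual (convex hull X) \<subseteq> {u. \<forall>v\<in>X. inner u v \<ge> -1}"
    unfolding polar_dual_def using hull_subset[of X convex] by blast
  show "{u. \<forall>v\<in>X. inner u v \<ge> -1} \<subseteq> polar_dual (convex hull X)"
  proof
    fix u assume u: "u \<in> {u. \<forall>v\<in>X. inner u v \<ge> -1}"
    have "convex hull X \<subseteq> {v. -1 \<le> u \<bullet> v}"
      using u by (intro hull_minimal convex_halfspace_ge) auto
    then show "u \<in> polar_dual (convex hull X)" unfolding polar_dual_def by auto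
  qed
qed

definition stdset :: "(real^'n) set" where
  "stdset = {z. (\<forall>i. 0 \<le> z$i) \<and> sum (\<lambda>i. z$i) UNIV \<le> 1}"

lemma sum_Basis_cart: "sum f (Basis :: (real^'n) set) = (\<Sum>i\<in>UNIV. f (axis i 1))"
proof -
  have "inj (\<lambda>i::'n. axis i (1::real))" by (auto simp: inj_def axis_eq_axis)
  then show ?thesis unfolding Basis_cart_real by (simp add: sum.reindex)
qed

lemma std_eq_stdset: "convex hull (insert 0 Basis) = (stdset :: (real^'n) set)"
  unfolding std_simplex stdset_def sum_Basis_cart by (auto simp: Basis_cart_real inner_axis)

lemma polar_dual_simp0:
  fixes q :: "real^'n"
  assumes q: "\<And>i. q$i > 0"
  defines "c \<equiv> (\<lambda>i. (1 + sum (\<lambda>j. q$j) UNIV) / q$i)"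
  shows "polar_dual (simp0 q) = (+) (- (\<chi> i. 1)) ` ((\<lambda>x. \<chi> k. c k * x$k) ` stdset)"
proof -
  define s where "s = sum (\<lambda>j. q$j) UNIV"
  have s0: "s \<ge> 0" unfolding s_def using q by (intro sum_nonneg) (auto intro: less_imp_le)
  have cdef: "c i = (1 + s) / q$i" for i by (simp add: c_def s_def)
  have cpos: "c i > 0" for i using q[of i] s0 by (simp add: cdef)
  have D: "polar_dual (simp0 q) = {u. (\<forall>i. u$i \<ge> -1) \<and> inner u q \<le> 1}"
    unfolding simp0_def polar_dual_hull by (auto simp: inner_axis)
  have iq: "inner u q = (\<Sum>i\<in>UNIV. u$i * q$i)" for u :: "real^'n" by (simp add: inner_vec_def)
  show ?thesis
  proof (rule set_eqI, rule iffI)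
    fix u assume "u \<in> polar_dual (simp0 q)"
    then have u1: "\<And>i. u$i \<ge> -1" and uq: "inner u q \<le> 1" unfolding D by auto
    define z where "z = (\<chi> k. (u$k + 1) / c k)"
    have "z \<in> stdset"
    proof -
      have "0 \<le> z$i" for i using u1[of i] cpos[of i] by (simp add: z_def)
      moreover have "sum (\<lambda>i. z$i) UNIV \<le> 1"
      proof -
        have "sum (\<lambda>i. z$i) UNIV = (\<Sum>i\<in>UNIV. (u$i * q$i + q$i) / (1+s))"
          using q by (intro sum.cong) (auto simp: z_def cdef field_simps)
        also have "\<dots> = (inner u q + s) / (1+s)"
          by (simp add: sum_divide_distrib[symmetric] sum.distrib iq s_def)
        also have "\<dots> \<le> 1" using uq s0 by (simp add: divide_le_eq_1)
        finally show ?thesis .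
      qed
      ultimately show ?thesis by (simp add: stdset_def)
    qed
    moreover have "u = - (\<chi> i. 1) + (\<chi> k. c k * z$k)"
    proof -
      have "c k * ((u$k + 1) / c k) = u$k + 1" for k using cpos[of k] by simp
      then show ?thesis by (simp add: vec_eq_iff z_def)
    qed
    ultimately show "u \<in> (+) (- (\<chi> i. 1)) ` ((\<lambda>x. \<chi> k. c k * x$k) ` stdset)" by blast
  next
    fix u assume "u \<in> (+) (- (\<chi> i. 1)) ` ((\<lambda>x. \<chi> k. c k * x$k) ` stdset)"
    then obtain z where z: "z \<in> stdset" and uz: "u = - (\<chi> i. 1) + (\<chi> k. c k * z$k)" by auto
    have z0: "\<And>i. z$i \<ge> 0" and z1: "sum (\<lambda>i. z$i) UNIV \<le> 1" using z by (auto simp: stdset_def)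
    have "u$i \<ge> -1" for i using z0[of i] cpos[of i] uz by simp
    moreover have "inner u q \<le> 1"
    proof -
      have "inner u q = (\<Sum>i\<in>UNIV. (1+s) * z$i - q$i)"
      proof -
        have qne: "q$i \<noteq> 0" for i using q[of i] by simp
        show ?thesis unfolding iq uz by (intro sum.cong) (auto simp: cdef field_simps qne)
      qed
      also have "\<dots> = (1+s) * sum (\<lambda>i. z$i) UNIV - s"
        by (simp add: sum_subtractf sum_distrib_left s_def)
      also have "\<dots> \<le> (1+s) * 1 - s" using z1 s0 by (intro diff_right_mono mult_left_mono) auto
      finally show ?thesis by simp
    qed
    ultimately show "u \<in> polar_dual (simp0 q)" unfolding D by auto
  qed
qed

lemma stdset_lmeasurable: "(stdset :: (real^'n) set) \<in> lmeasurable"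
  unfolding std_eq_stdset[symmetric] by (intro lmeasurable_compact finite_imp_compact_convex_hull) auto

lemma measure_polar_dual_simp0:
  fixes q :: "real^'n"
  assumes q: "\<And>i. q$i > 0"
  shows "measure lebesgue (polar_dual (simp0 q)) = (1 + sum (\<lambda>i. q$i) UNIV) ^ CARD('n) / prod (\<lambda>i. q$i) UNIV / fact CARD('n)"
    and "polar_dual (simp0 q) \<in> lmeasurable"
proof -
  define s where "s = sum (\<lambda>j. q$j) UNIV"
  define c where "c = (\<lambda>i. (1 + s) / q$i)"
  have s0: "s \<ge> 0" unfolding s_def using q by (intro sum_nonneg) (auto intro: less_imp_le)
  have eq: "polar_dual (simp0 q) = (+) (- (\<chi> i. 1)) ` ((\<lambda>x. \<chi> k. c k * x$k) ` stdset)"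
    unfolding c_def s_def by (rule polar_dual_simp0[OF q])
  have pc: "prod c UNIV = (1+s) ^ CARD('n) / prod (\<lambda>i. q$i) UNIV"
    by (simp add: c_def prod_dividef)
  have pc0: "prod c UNIV \<ge> 0" unfolding c_def using q s0 by (intro prod_nonneg) (auto intro: less_imp_le)
  show "measure lebesgue (polar_dual (simp0 q)) = (1 + sum (\<lambda>i. q$i) UNIV) ^ CARD('n) / prod (\<lambda>i. q$i) UNIV / fact CARD('n)"
  proof -
    have "measure lebesgue (polar_dual (simp0 q)) = \<bar>prod c UNIV\<bar> * measure lebesgue (stdset :: (real^'n) set)"
      by (simp only: eq measure_translation measure_stretch[OF stdset_lmeasurable])
    also have "\<bar>prod c UNIV\<bar> = prod c UNIV" using pc0 by simp
    also have "measure lebesgue (stdset :: (real^'n) set) = 1 / fact CARD('n)"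
      by (simp add: std_eq_stdset[symmetric] measure_std_simplex)
    finally show ?thesis using pc by (simp add: s_def)
  qed
  show "polar_dual (simp0 q) \<in> lmeasurable"
    unfolding eq by (intro measurable_translation measurable_stretch stdset_lmeasurable)
qed

lemma polar_dual_linear:
  fixes M K :: "real^'n^'n"
  assumes K: "transpose M ** K = mat 1" "K ** transpose M = mat 1"
  shows "polar_dual ((\<lambda>x. M *v x) ` T) = (\<lambda>y. K *v y) ` polar_dual T"
proof -
  have ip: "inner u (M *v x) = inner (transpose M *v u) x" for u x
    by (simp add: dot_lmul_matrix)
  have L: "polar_dual ((\<lambda>x. M *v x) ` T) = {u. transpose M *v u \<in> polar_dual T}"
    unfolding polar_dual_def by (auto simp: ip)
  show ?thesis unfolding L
  proof (rule set_eqI, rule iffI)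
    fix u assume "u \<in> {u. transpose M *v u \<in> polar_dual T}"
    moreover have "u = K *v (transpose M *v u)" by (simp only: matrix_vector_mul_assoc K(2) matrix_vector_mul_lid)
    ultimately show "u \<in> (\<lambda>y. K *v y) ` polar_dual T" by auto
  next
    fix u assume "u \<in> (\<lambda>y. K *v y) ` polar_dual T"
    then obtain y where "y \<in> polar_dual T" "u = K *v y" by auto
    moreover have "transpose M *v (K *v y) = y" by (simp only: matrix_vector_mul_assoc K(1) matrix_vector_mul_lid)
    ultimately show "u \<in> {u. transpose M *v u \<in> polar_dual T}" by simp
  qed
qed

lemma simp0_compact: "compact (simp0 (q :: real^'n))"
  unfolding simp0_def by (intro finite_imp_compact_convex_hull) auto

lemma vol_product_simp0:
  fixes M :: "real^'n^'n" and q :: "real^'n"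
  assumes M: "det M \<noteq> 0" and q: "\<And>i. q$i > 0"
  shows "Vol ((\<lambda>x. M *v x) ` simp0 q) * Vol (polar_dual ((\<lambda>x. M *v x) ` simp0 q))
          = (1 + sum (\<lambda>i. q$i) UNIV) ^ (CARD('n) + 1) / prod (\<lambda>i. q$i) UNIV"
proof -
  define s where "s = sum (\<lambda>j. q$j) UNIV"
  have s0: "s \<ge> 0" unfolding s_def using q by (intro sum_nonneg) (auto intro: less_imp_le)
  have "invertible (transpose M)" using M by (simp add: invertible_det_nz)
  then obtain K where K: "transpose M ** K = mat 1" "K ** transpose M = mat 1"
    unfolding invertible_def by blast
  have dK: "det M * det K = 1" using det_mul[of "transpose M" K] K(1) by simp
  have lin: "linear (\<lambda>x. M *v x)" "linear (\<lambda>x. K *v x)" by (auto intro: matrix_vector_mul_linear)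
  have m0: "simp0 q \<in> lmeasurable" by (intro lmeasurable_compact simp0_compact)
  have v1: "measure lebesgue ((\<lambda>x. M *v x) ` simp0 q) = \<bar>det M\<bar> * ((1 + s) / fact CARD('n))"
    using measure_linear_image_fin[OF lin(1) m0] measure_simp0[of q] q
    by (simp add: matrix_of_matrix_vector_mul s_def less_imp_le)
  have v2: "measure lebesgue (polar_dual ((\<lambda>x. M *v x) ` simp0 q))
      = \<bar>det K\<bar> * ((1 + s) ^ CARD('n) / prod (\<lambda>i. q$i) UNIV / fact CARD('n))"
    unfolding polar_dual_linear[OF K]
    using measure_linear_image_fin[OF lin(2) measure_polar_dual_simp0(2)[OF q]] measure_polar_dual_simp0(1)[OF q]
    by (simp add: matrix_of_matrix_vector_mul s_def)
  have "\<bar>det M\<bar> * \<bar>det K\<bar> = 1" using dK by (metis abs_mult abs_one)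
  have f0: "fact CARD('n) \<noteq> (0::real)" by simp
  have "Vol ((\<lambda>x. M *v x) ` simp0 q) = \<bar>det M\<bar> * (1 + s)"
    unfolding Vol_def v1 using f0 by simp
  moreover have "Vol (polar_dual ((\<lambda>x. M *v x) ` simp0 q)) = \<bar>det K\<bar> * ((1 + s) ^ CARD('n) / prod (\<lambda>i. q$i) UNIV)"
    unfolding Vol_def v2 using f0 by simp
  ultimately have "Vol ((\<lambda>x. M *v x) ` simp0 q) * Vol (polar_dual ((\<lambda>x. M *v x) ` simp0 q))
     = (\<bar>det M\<bar> * \<bar>det K\<bar>) * ((1 + s) * (1 + s) ^ CARD('n) / prod (\<lambda>i. q$i) UNIV)" by simp
  then show ?thesis using \<open>\<bar>det M\<bar> * \<bar>det K\<bar> = 1\<close> by (simp add: s_def)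
qed


lemma det_rat: "(\<forall>i j. A$i$j \<in> \<rat>) \<Longrightarrow> det (A::real^'n^'n) \<in> \<rat>"
  unfolding det_def by (intro Rats_sum Rats_mult Rats_prod) (auto simp: Rats_of_int)

lemma solve_rat:
  fixes A :: "real^'n^'n"
  assumes A: "\<forall>i j. A$i$j \<in> \<rat>" and d: "det A \<noteq> 0" and b: "rat_vec (A *v x)"
  shows "rat_vec x"
proof -
  have x: "x = (\<chi> k. det (\<chi> i j. if j = k then (A *v x)$i else A$i$j) / det A)"
    using cramer[OF d, of x "A *v x"] by simp
  have "det (\<chi> i j. if j = k then (A *v x)$i else A$i$j) \<in> \<rat>" for k
    using A b by (intro det_rat) (auto simp: rat_vec_def)
  moreover have "det A \<in> \<rat>" using A by (rule det_rat)
  ultimately show ?thesis unfolding rat_vec_def by (subst x) (auto intro: Rats_divide)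
qed

lemma surj_det:
  fixes M :: "real^'n^'n"
  assumes "surj (\<lambda>x. M *v x)"
  shows "det M \<noteq> 0"
proof -
  obtain B where "M ** B = mat 1" using assms matrix_right_invertible_surjective by blast
  then have "det M * det B = 1" by (metis det_I det_mul)
  then show ?thesis by auto
qed

lemma interior_range_surj:
  fixes M :: "real^'n^'n"
  assumes "0 \<in> interior S" "S \<subseteq> range (\<lambda>x. M *v x)"
  shows "surj (\<lambda>x. M *v x)"
proof -
  obtain e where e: "e > 0" "ball 0 e \<subseteq> S" using assms(1) by (meson mem_interior)
  have "y \<in> range (\<lambda>x. M *v x)" for y
  proof (cases "y = 0")
    case True then show ?thesis by (metis matrix_vector_mult_0_right rangeI)
  next
    case False
    define c where "c = e / (2 * norm y)"
    have c: "c > 0" using e False by (simp add: c_def)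
    have "norm (c *\<^sub>R y) < e" using e False by (simp add: c_def)
    then have "c *\<^sub>R y \<in> S" using e by auto
    then obtain w where w: "c *\<^sub>R y = M *v w" using assms(2) by auto
    have "M *v ((1/c) *\<^sub>R w) = (1/c) *\<^sub>R (M *v w)"
      by (simp add: matrix_vector_mult_scaleR)
    also have "\<dots> = y" using c by (simp add: w[symmetric])
    finally show ?thesis by (metis rangeI)
  qed
  then show ?thesis by auto
qed

lemma matrix_cols_mult:
  fixes f :: "'n \<Rightarrow> real^'n"
  shows "(\<chi> r c. f c $ r) *v x = (\<Sum>c\<in>UNIV. x$c *\<^sub>R f c)"
  by (simp add: vec_eq_iff matrix_vector_mult_def sum_component mult.commute)

lemma matrix_cols_axis:
  fixes f :: "'n \<Rightarrow> real^'n"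
  shows "(\<chi> r c. f c $ r) *v axis i 1 = f i"
proof -
  have "(\<Sum>c\<in>UNIV. axis i 1 $ c *\<^sub>R f c) = (\<Sum>c\<in>UNIV. if c = i then f c else 0)"
    by (intro sum.cong) (auto simp: axis_def)
  then show ?thesis unfolding matrix_cols_mult by simp
qed

lemma IP_setup:
  fixes \<Delta> :: "(real^'n) set"
  assumes "IP_simplex \<Delta>"
  shows "\<exists>M q. det M \<noteq> 0 \<and> (\<forall>i j. M$i$j \<in> \<rat>) \<and> (\<forall>i. q$i > 0) \<and> rat_vec q
     \<and> \<Delta> = (\<lambda>x. M *v x) ` simp0 q
     \<and> vertices \<Delta> = (\<lambda>x. M *v x) ` (range (\<lambda>i. axis i 1) \<union> {-q})
     \<and> (\<forall>v \<in> vertices \<Delta>. rat_vec v)"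
proof -
  obtain V where V: "finite V" "card V = CARD('n) + 1" "\<not> affine_dependent V"
      "\<forall>v\<in>V. rat_vec v" "\<Delta> = convex hull V" "0 \<in> interior \<Delta>"
    using assms unfolding IP_simplex_def by blast
  have "0 \<in> rel_interior (convex hull V)" using V(5,6) interior_subset_rel_interior by blast
  then obtain u where u: "\<forall>x\<in>V. 0 < u x" "sum u V = 1" "(\<Sum>x\<in>V. u x *\<^sub>R x) = 0"
    unfolding rel_interior_convex_hull_explicit[OF V(3)] by blast
  have "V \<noteq> {}" using V(2) by auto
  then obtain v0 where v0: "v0 \<in> V" by blast
  have "card (V - {v0}) = CARD('n)" using V(1,2) v0 by simp
  then obtain f where f: "bij_betw f (UNIV::'n set) (V - {v0})"
    using finite_same_card_bij[of "UNIV::'n set" "V - {v0}"] V(1) by auto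
  define M where "M = (\<chi> r c. f c $ r)"
  define q where "q = (\<chi> i. u (f i) / u v0)"
  have u0: "u v0 > 0" using u v0 by auto
  have fV: "f i \<in> V" "f i \<noteq> v0" for i using f by (auto simp: bij_betw_def)
  have qpos: "\<forall>i. q$i > 0" using u u0 fV by (simp add: q_def)
  have rangef: "range f = V - {v0}" using f by (simp add: bij_betw_def)
  have sumV: "(\<Sum>x\<in>V. u x *\<^sub>R x) = u v0 *\<^sub>R v0 + (\<Sum>i\<in>UNIV. u (f i) *\<^sub>R f i)"
  proof -
    have "(\<Sum>x\<in>V. u x *\<^sub>R x) = u v0 *\<^sub>R v0 + (\<Sum>x\<in>V - {v0}. u x *\<^sub>R x)"
      using V(1) v0 by (simp add: sum.remove)
    also have "(\<Sum>x\<in>V - {v0}. u x *\<^sub>R x) = (\<Sum>i\<in>UNIV. u (f i) *\<^sub>R f i)"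
      using sum.reindex_bij_betw[OF f, of "\<lambda>x. u x *\<^sub>R x"] by simp
    finally show ?thesis .
  qed
  have Mq: "M *v (-q) = v0"
  proof -
    have "M *v (-q) = (\<Sum>i\<in>UNIV. (- (u (f i) / u v0)) *\<^sub>R f i)"
      unfolding M_def matrix_cols_mult by (simp add: q_def)
    also have "\<dots> = - (1 / u v0) *\<^sub>R (\<Sum>i\<in>UNIV. u (f i) *\<^sub>R f i)"
      by (simp add: scaleR_sum_right)
    also have "(\<Sum>i\<in>UNIV. u (f i) *\<^sub>R f i) = - (u v0 *\<^sub>R v0)" using sumV u(3) by (simp add: eq_neg_iff_add_eq_0 add.commute)
    finally show ?thesis using u0 by simp
  qed
  have Max: "M *v axis i 1 = f i" for i unfolding M_def by (rule matrix_cols_axis)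
  have Vimg: "(\<lambda>x. M *v x) ` (range (\<lambda>i. axis i 1) \<union> {-q}) = V"
  proof -
    have "(\<lambda>x. M *v x) ` (range (\<lambda>i. axis i 1) \<union> {-q}) = range f \<union> {v0}"
      by (auto simp: Max Mq image_iff)
    also have "\<dots> = V" using rangef v0 by auto
    finally show ?thesis .
  qed
  have Deq: "\<Delta> = (\<lambda>x. M *v x) ` simp0 q"
    unfolding simp0_def convex_hull_linear_image[OF matrix_vector_mul_linear] Vimg using V(5) .
  have "surj (\<lambda>x. M *v x)" using interior_range_surj[OF V(6)] Deq by auto
  then have dM: "det M \<noteq> 0" by (rule surj_det)
  have Mrat: "\<forall>i j. M$i$j \<in> \<rat>" using V(4) fV unfolding M_def rat_vec_def by auto
  have qrat: "rat_vec q"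
  proof -
    have "rat_vec (-q)" using solve_rat[OF Mrat dM, of "-q"] Mq V(4) v0 by simp
    then show ?thesis by (simp add: rat_vec_def)
  qed
  have vert: "vertices \<Delta> = V"
    unfolding vertices_def V(5) using extreme_point_of_convex_hull_affine_independent[OF V(3)] by auto
  show ?thesis
    apply (rule exI[of _ M], rule exI[of _ q])
    using dM Mrat qpos qrat Deq vert Vimg V(4) by auto
qed


lemma extreme_point_inj_linear:
  assumes f: "linear f" "inj f"
  shows "(f x extreme_point_of f ` S) \<longleftrightarrow> (x extreme_point_of S)"
proof -
  have "f x \<in> f ` S \<longleftrightarrow> x \<in> S" using f(2) by (auto simp: inj_def)
  moreover have "(\<forall>a\<in>f ` S. \<forall>b\<in>f ` S. f x \<notin> open_segment a b) \<longleftrightarrow> (\<forall>a\<in>S. \<forall>b\<in>S. x \<notin> open_segment a b)"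
  proof -
    have "f x \<in> open_segment (f a) (f b) \<longleftrightarrow> x \<in> open_segment a b" for a b
      using open_segment_linear_image[OF f, of a b] f(2) by (auto simp: inj_def)
    then show ?thesis by auto
  qed
  ultimately show ?thesis unfolding extreme_point_of_def by blast
qed

lemma vertices_inj_linear:
  assumes f: "linear f" "inj f"
  shows "vertices (f ` S) = f ` vertices S"
proof
  show "vertices (f ` S) \<subseteq> f ` vertices S"
  proof
    fix y assume y: "y \<in> vertices (f ` S)"
    then have "y \<in> f ` S" unfolding vertices_def extreme_point_of_def by auto
    then obtain x where x: "y = f x" by auto
    then show "y \<in> f ` vertices S" using y extreme_point_inj_linear[OF f] unfolding vertices_def by auto
  qed
  show "f ` vertices S \<subseteq> vertices (f ` S)"
    using extreme_point_inj_linear[OF f] unfolding vertices_def by auto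
qed

definition U0 :: "real^'n \<Rightarrow> (real^'n) set" where
  "U0 q = insert (- (\<chi> i. 1)) (range (\<lambda>i. - (\<chi> i. 1) + ((1 + sum (\<lambda>j. q$j) UNIV) / q$i) *\<^sub>R axis i 1))"

lemma polar_dual_simp0_hull:
  fixes q :: "real^'n"
  assumes q: "\<And>i. q$i > 0"
  shows "polar_dual (simp0 q) = convex hull (U0 q)"
proof -
  define c where "c = (\<lambda>i. (1 + sum (\<lambda>j. q$j) UNIV) / q$i)"
  have lin: "linear (\<lambda>x::real^'n. \<chi> k. c k * x$k)"
    by (rule linearI) (auto simp: vec_eq_iff algebra_simps)
  have "polar_dual (simp0 q) = (+) (- (\<chi> i. 1)) ` ((\<lambda>x. \<chi> k. c k * x$k) ` (convex hull (insert 0 Basis)))"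
    unfolding std_eq_stdset c_def by (rule polar_dual_simp0[OF q])
  also have "\<dots> = convex hull ((+) (- (\<chi> i. 1)) ` ((\<lambda>x. \<chi> k. c k * x$k) ` insert 0 Basis))"
    unfolding convex_hull_linear_image[OF lin] convex_hull_translation ..
  also have "(+) (- (\<chi> i. 1)) ` ((\<lambda>x. \<chi> k. c k * x$k) ` insert 0 Basis) = U0 q"
  proof -
    have "(\<chi> k. c k * axis i 1 $ k) = c i *\<^sub>R axis i 1" for i by (simp add: vec_eq_iff axis_def)
    moreover have "(\<chi> k. c k * (0::real^'n) $ k) = 0" by (simp add: vec_eq_iff)
    ultimately show ?thesis unfolding U0_def c_def Basis_cart_real by (auto simp: image_image)
  qed
  finally show ?thesis .
qed

lemma U0_indep:
  fixes q :: "real^'n"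
  assumes q: "\<And>i. q$i > 0"
  shows "\<not> affine_dependent (U0 q)"
proof -
  define s where "s = sum (\<lambda>j. q$j) UNIV"
  have s0: "s \<ge> 0" unfolding s_def using q by (intro sum_nonneg) (auto intro: less_imp_le)
  define c where "c = (\<lambda>i. (1 + s) / q$i)"
  have c0: "c i \<noteq> 0" for i using q[of i] s0 by (simp add: c_def)
  define a :: "real^'n" where "a = - (\<chi> i. (1::real))"
  define S where "S = range (\<lambda>i. a + c i *\<^sub>R axis i (1::real))"
  have U: "U0 q = insert a S" unfolding U0_def S_def a_def c_def s_def ..
  have aS: "a \<notin> S" using c0 by (auto simp: S_def axis_eq_axis)
  have T: "(\<lambda>x. -a + x) ` S = range (\<lambda>i. c i *\<^sub>R axis i (1::real))"
    unfolding S_def by (auto simp: image_image)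
  have "independent (range (\<lambda>i. c i *\<^sub>R axis i (1::real)))"
  proof (rule pairwise_orthogonal_independent)
    show "pairwise orthogonal (range (\<lambda>i. c i *\<^sub>R axis i (1::real)))"
      unfolding pairwise_def orthogonal_def by (auto simp: inner_axis_axis)
    show "0 \<notin> range (\<lambda>i. c i *\<^sub>R axis i (1::real))" using c0 by (auto simp: axis_eq_axis)
  qed
  then show ?thesis unfolding U affine_dependent_iff_dependent[OF aS] T by simp
qed

lemma inner_M_K:
  fixes M K :: "real^'n^'n"
  assumes "transpose M ** K = mat 1"
  shows "inner (M *v x) (K *v y) = inner x y"
proof -
  have "inner (M *v x) (K *v y) = inner (K *v y) (M *v x)" by (simp add: inner_commute)
  also have "\<dots> = inner ((K *v y) v* M) x" by (simp add: dot_lmul_matrix)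
  also have "(K *v y) v* M = transpose M *v (K *v y)" by simp
  also have "\<dots> = y" by (simp only: matrix_vector_mul_assoc assms matrix_vector_mul_lid)
  finally show ?thesis by (simp add: inner_commute)
qed

lemma Rats_common_denom:
  fixes R :: "real set"
  assumes "finite R" "R \<subseteq> \<rat>"
  shows "\<exists>k::nat. k > 0 \<and> (\<forall>r\<in>R. real k * r \<in> \<int>)"
  using assms
proof (induction R rule: finite_induct)
  case empty then show ?case by (intro exI[of _ 1]) auto
next
  case (insert r R)
  then obtain k where k: "k > 0" "\<forall>r\<in>R. real k * r \<in> \<int>" by auto
  have "r \<in> \<rat>" using insert by auto
  then obtain a b where ab: "b > 0" "r = of_int a / of_int b" by (rule Rats_cases') auto
  define k' where "k' = k * nat b"
  have "k' > 0" using k ab by (simp add: k'_def)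
  moreover have "real k' * r \<in> \<int>" using ab by (simp add: k'_def)
  moreover have "real k' * r' \<in> \<int>" if "r' \<in> R" for r'
  proof -
    have rk: "real k' = real k * of_int b" using ab by (simp add: k'_def)
    have "real k' * r' = of_int b * (real k * r')" unfolding rk by (simp add: algebra_simps)
    then show ?thesis using k(2) that by (metis Ints_mult Ints_of_int)
  qed
  ultimately show ?case by auto
qed

lemma vec_common_denom:
  fixes X :: "(real^'n) set"
  assumes "finite X" "\<forall>x\<in>X. rat_vec x"
  shows "\<exists>k::nat. k > 0 \<and> (\<forall>x\<in>X. int_vec (real k *\<^sub>R x))"
proof -
  have "finite ((\<lambda>(x,i). x$i) ` (X \<times> UNIV))" using assms(1) by auto
  moreover have "(\<lambda>(x,i). x$i) ` (X \<times> UNIV) \<subseteq> \<rat>" using assms(2) by (auto simp: rat_vec_def)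
  ultimately obtain k where "k > 0" "\<forall>r\<in>(\<lambda>(x,i). x$i) ` (X \<times> UNIV). real k * r \<in> \<int>"
    using Rats_common_denom by blast
  then show ?thesis unfolding int_vec_def by (intro exI[of _ k]) auto
qed

lemma gQ_props:
  fixes P :: "(real^'n) set"
  assumes "finite (vertices P)" "\<forall>v\<in>vertices P. rat_vec v"
  shows "gQ P > 0" "\<forall>v\<in>vertices P. int_vec (real (gQ P) *\<^sub>R v)"
proof -
  obtain k where "k > 0 \<and> (\<forall>v\<in>vertices P. int_vec (real k *\<^sub>R v))" using vec_common_denom[OF assms] by blast
  then have "gQ P > 0 \<and> (\<forall>v\<in>vertices P. int_vec (real (gQ P) *\<^sub>R v))"
    unfolding gQ_def by (rule LeastI)
  then show "gQ P > 0" "\<forall>v\<in>vertices P. int_vec (real (gQ P) *\<^sub>R v)" by auto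
qed

lemma int_vec_inner: "int_vec a \<Longrightarrow> int_vec b \<Longrightarrow> inner a (b :: real^'n) \<in> \<int>"
  unfolding int_vec_def inner_vec_def by (intro Ints_sum Ints_mult) auto

lemma gorenstein_integrality:
  fixes \<Delta> :: "(real^'n) set" and M :: "real^'n^'n" and q :: "real^'n"
  assumes dM: "det M \<noteq> 0" and Mrat: "\<forall>i j. M$i$j \<in> \<rat>" and q: "\<forall>i. q$i > 0" and qrat: "rat_vec q"
    and D: "\<Delta> = (\<lambda>x. M *v x) ` simp0 q"
    and vD: "vertices \<Delta> = (\<lambda>x. M *v x) ` (range (\<lambda>i. axis i 1) \<union> {-q})"
    and vrat: "\<forall>v\<in>vertices \<Delta>. rat_vec v"
  shows "gorenstein_index \<Delta> \<ge> 1"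
    and "real (gorenstein_index \<Delta>) * (1 + sum (\<lambda>j. q$j) UNIV) \<in> \<int>"
    and "\<forall>i. real (gorenstein_index \<Delta>) * ((1 + sum (\<lambda>j. q$j) UNIV) / q$i) \<in> \<int>"
proof -
  define s where "s = sum (\<lambda>j. q$j) UNIV"
  have "invertible (transpose M)" using dM by (simp add: invertible_det_nz)
  then obtain K where K: "transpose M ** K = mat 1" "K ** transpose M = mat 1"
    unfolding invertible_def by blast
  have Kinj: "inj (\<lambda>y. K *v y)"
  proof (rule injI)
    fix x y assume "K *v x = K *v y"
    then have "transpose M *v (K *v x) = transpose M *v (K *v y)" by simp
    then show "x = y" by (simp only: matrix_vector_mul_assoc K(1) matrix_vector_mul_lid)
  qed
  have Klin: "linear (\<lambda>y. K *v y)" by (rule matrix_vector_mul_linear)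
  have dualD: "polar_dual \<Delta> = (\<lambda>y. K *v y) ` (convex hull (U0 q))"
    unfolding D polar_dual_linear[OF K] polar_dual_simp0_hull[OF q[rule_format]] ..
  have vdual: "vertices (polar_dual \<Delta>) = (\<lambda>y. K *v y) ` U0 q"
  proof -
    have "vertices (convex hull (U0 q)) = U0 q"
      unfolding vertices_def using extreme_point_of_convex_hull_affine_independent[OF U0_indep[OF q[rule_format]]] by auto
    then show ?thesis unfolding dualD vertices_inj_linear[OF Klin Kinj] by simp
  qed
  have MTrat: "\<forall>i j. transpose M $i$j \<in> \<rat>" using Mrat by (simp add: transpose_def)
  have dMT: "det (transpose M) \<noteq> 0" using dM by simp
  have Krat: "rat_vec (K *v w)" if "rat_vec w" for w
  proof (rule solve_rat[OF MTrat dMT])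
    have "transpose M *v (K *v w) = w" by (simp only: matrix_vector_mul_assoc K(1) matrix_vector_mul_lid)
    then show "rat_vec (transpose M *v (K *v w))" using that by simp
  qed
  have srat: "s \<in> \<rat>" using qrat unfolding s_def rat_vec_def by (intro Rats_sum) auto
  have U0rat: "\<forall>w\<in>U0 q. rat_vec w"
    using srat qrat unfolding U0_def s_def[symmetric] rat_vec_def
    by (auto simp: axis_def intro!: Rats_add Rats_mult Rats_divide)
  have vdrat: "\<forall>w\<in>vertices (polar_dual \<Delta>). rat_vec w" using vdual U0rat Krat by auto
  have finv: "finite (vertices \<Delta>)" using vD by simp
  have finvd: "finite (vertices (polar_dual \<Delta>))" using vdual unfolding U0_def by simp
  note k = gQ_props[OF finv vrat] and m = gQ_props[OF finvd vdrat]
  define kk where "kk = gQ \<Delta>"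
  define mm where "mm = gQ (polar_dual \<Delta>)"
  have g: "gorenstein_index \<Delta> = kk * mm" by (simp add: gorenstein_index_def kk_def mm_def)
  show "gorenstein_index \<Delta> \<ge> 1" using k(1) m(1) g kk_def mm_def by simp
  have pair: "real (gorenstein_index \<Delta>) * inner x y \<in> \<int>"
    if "M *v x \<in> vertices \<Delta>" "K *v y \<in> vertices (polar_dual \<Delta>)" for x y
  proof -
    have "inner (real kk *\<^sub>R (M *v x)) (real mm *\<^sub>R (K *v y)) \<in> \<int>"
      using k(2) m(2) that by (intro int_vec_inner) (auto simp: kk_def mm_def)
    then show ?thesis by (simp add: inner_M_K[OF K(1)] g mult.commute mult.left_commute)
  qed
  have "real (gorenstein_index \<Delta>) * inner (-q) (- (\<chi> i. 1)) \<in> \<int>"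
    by (rule pair) (auto simp: vD vdual U0_def)
  moreover have "inner (-q) (- (\<chi> i. (1::real))) = s" by (simp add: inner_vec_def s_def)
  ultimately have gs: "real (gorenstein_index \<Delta>) * s \<in> \<int>" by simp
  then show "real (gorenstein_index \<Delta>) * (1 + sum (\<lambda>j. q$j) UNIV) \<in> \<int>"
    unfolding s_def[symmetric] by (simp add: distrib_left Ints_add)
  show "\<forall>i. real (gorenstein_index \<Delta>) * ((1 + sum (\<lambda>j. q$j) UNIV) / q$i) \<in> \<int>"
  proof
    fix i
    define w where "w = - (\<chi> i. 1) + ((1 + s) / q$i) *\<^sub>R axis i (1::real)"
    have "real (gorenstein_index \<Delta>) * inner (axis i 1) w \<in> \<int>"
      by (rule pair) (auto simp: vD vdual U0_def w_def s_def)
    moreover have "inner (axis i 1) w = (1 + s) / q$i - 1"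
      by (simp add: w_def inner_axis' inner_add_right)
    ultimately have "real (gorenstein_index \<Delta>) * ((1 + s) / q$i) - real (gorenstein_index \<Delta>) \<in> \<int>"
      by (simp add: right_diff_distrib)
    then have "real (gorenstein_index \<Delta>) * ((1 + s) / q$i) - real (gorenstein_index \<Delta>) + real (gorenstein_index \<Delta>) \<in> \<int>"
      by (intro Ints_add) auto
    then show "real (gorenstein_index \<Delta>) * ((1 + sum (\<lambda>j. q$j) UNIV) / q$i) \<in> \<int>" by (simp add: s_def)
  qed
qed


lemma sum_list_perm_map1:
  fixes f :: "'a \<Rightarrow> 'b::comm_monoid_add"
  assumes "mset xs = mset ys"
  shows "sum_list (map f xs) = sum_list (map f ys)"
proof -
  have m: "mset (map f xs) = mset (map f ys)" using assms by simp
  have "sum_list (map f xs) = sum_mset (mset (map f xs))" by (rule sum_mset_sum_list[symmetric])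
  also have "\<dots> = sum_mset (mset (map f ys))" using m by simp
  also have "\<dots> = sum_list (map f ys)" by (rule sum_mset_sum_list)
  finally show ?thesis .
qed

lemma sum_list_perm_map2:
  fixes f :: "'a \<Rightarrow> 'b::comm_monoid_mult"
  assumes "mset xs = mset ys"
  shows "prod_list (map f xs) = prod_list (map f ys)"
proof -
  have m: "mset (map f xs) = mset (map f ys)" using assms by simp
  have "prod_list (map f xs) = prod_mset (mset (map f xs))" by (rule prod_mset_prod_list[symmetric])
  also have "\<dots> = prod_mset (mset (map f ys))" using m by simp
  also have "\<dots> = prod_list (map f ys)" by (rule prod_mset_prod_list)
  finally show ?thesis .
qed

lemma sort_fun:
  fixes a :: "'a::finite \<Rightarrow> nat"
  obtains x where "\<And>i j. i \<le> j \<Longrightarrow> j < CARD('a) \<Longrightarrow> x i \<le> x j"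
    "x ` {..<CARD('a)} = range a"
    "\<And>f::nat\<Rightarrow>real. (\<Sum>i<CARD('a). f (x i)) = (\<Sum>j\<in>UNIV. f (a j))"
    "\<And>f::nat\<Rightarrow>real. (\<Prod>i<CARD('a). f (x i)) = (\<Prod>j\<in>UNIV. f (a j))"
proof -
  obtain E where E: "set E = (UNIV :: 'a set)" "distinct E" using finite_distinct_list[of "UNIV :: 'a set"] by auto
  have lenE: "length E = CARD('a)" using E distinct_card by fastforce
  define xs where "xs = sort (map a E)"
  have len: "length xs = CARD('a)" by (simp add: xs_def lenE)
  have ms: "mset xs = mset (map a E)" by (simp add: xs_def)
  have S: "(\<Sum>i<CARD('a). f (xs ! i)) = (\<Sum>j\<in>UNIV. f (a j))" for f :: "nat \<Rightarrow> real"
  proof -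
    have "(\<Sum>i<CARD('a). f (xs ! i)) = sum_list (map f xs)"
      by (simp add: sum_list_sum_nth len atLeast0LessThan)
    also have "\<dots> = sum_list (map f (map a E))" by (rule sum_list_perm_map1[OF ms])
    also have "\<dots> = (\<Sum>j\<in>UNIV. f (a j))" using E by (simp add: sum.distinct_set_conv_list[symmetric] o_def)
    finally show ?thesis .
  qed
  have P: "(\<Prod>i<CARD('a). f (xs ! i)) = (\<Prod>j\<in>UNIV. f (a j))" for f :: "nat \<Rightarrow> real"
  proof -
    have "(\<Prod>i<CARD('a). f (xs ! i)) = prod_list (map f xs)"
      by (simp add: prod.list_conv_set_nth len atLeast0LessThan)
    also have "\<dots> = prod_list (map f (map a E))" by (rule sum_list_perm_map2[OF ms])
    also have "\<dots> = (\<Prod>j\<in>UNIV. f (a j))" using E by (simp add: prod.distinct_set_conv_list[symmetric] o_def)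
    finally show ?thesis .
  qed
  have I: "(\<lambda>i. xs ! i) ` {..<CARD('a)} = range a"
  proof -
    have "(\<lambda>i. xs ! i) ` {..<CARD('a)} = set xs" using len by (auto simp: set_conv_nth)
    also have "\<dots> = range a" using E by (simp add: xs_def)
    finally show ?thesis .
  qed
  have M: "xs ! i \<le> xs ! j" if "i \<le> j" "j < CARD('a)" for i j
    using sorted_nth_mono[of xs i j] that len by (simp add: xs_def)
  show ?thesis by (rule that[of "\<lambda>i. xs ! i"]) (use M I S P in auto)
qed

lemma coord_idx_bij: "bij_betw (coord_idx :: 'n::finite \<Rightarrow> nat) UNIV {1..CARD('n)}"
proof -
  have "\<exists>f. bij_betw f (UNIV::'n set) {1..CARD('n)}"
    by (intro finite_same_card_bij) auto
  then show ?thesis unfolding coord_idx_def by (rule someI_ex)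
qed

lemma sum_coord: "(\<Sum>i\<in>UNIV. h (coord_idx (i::'n::finite))) = (\<Sum>k<CARD('n). h (Suc k))"
  using sum.reindex_bij_betw[OF coord_idx_bij, of h] by (simp add: sum.atLeast1_atMost_eq)

lemma prod_coord: "(\<Prod>i\<in>UNIV. h (coord_idx (i::'n::finite))) = (\<Prod>k<CARD('n). h (Suc k))"
  using prod.reindex_bij_betw[OF coord_idx_bij, of h] by (simp add: prod.atLeast1_atMost_eq)

definition pvec :: "nat \<Rightarrow> real^'n" where
  "pvec g = (\<chi> i. real (sylv_t g (CARD('n) + 1)) / real (sylv_s g (coord_idx i)))"

lemma extremal_eq: "extremal_simplex g = simp0 (pvec g :: real^'n)"
proof -
  have "{\<chi> i. - real (sylv_t g (CARD('n) + 1)) / real (sylv_s g (coord_idx (i::'n)))} = {- pvec g}"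
    by (simp add: pvec_def vec_eq_iff)
  then show ?thesis unfolding extremal_simplex_def simp0_def by simp
qed

lemma coord_idx_range: "coord_idx (i::'n::finite) \<in> {1..CARD('n)}"
  using coord_idx_bij by (auto simp: bij_betw_def)

lemma pvec_pos: "g \<ge> 1 \<Longrightarrow> (pvec g :: real^'n) $ i > 0"
  using sylv_t_pos[of g "CARD('n) + 1"] sylv_s_ge2[of g "coord_idx i"] coord_idx_range[of i]
  by (simp add: pvec_def)

lemma extremal_vol:
  fixes N :: "real^'n^'n"
  assumes g: "g \<ge> 1" and N: "det N \<noteq> 0"
  shows "Vol ((\<lambda>x. N *v x) ` simp0 (pvec g)) * Vol (polar_dual ((\<lambda>x. N *v x) ` simp0 (pvec g)))
     = real (sylv_t g (CARD('n) + 1)) ^ 2 / real g ^ (CARD('n) + 2)"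
proof -
  define d where "d = CARD('n)"
  define t where "t = real (sylv_t g (d + 1))"
  have tpos: "t > 0" using sylv_t_pos[OF g, of "d+1"] by (simp add: t_def)
  have sum_p: "1 + sum (\<lambda>i. (pvec g :: real^'n) $ i) UNIV = t / real g"
  proof -
    have "sum (\<lambda>i. (pvec g :: real^'n) $ i) UNIV = t * (\<Sum>k<d. 1 / real (sylv_s g (Suc k)))"
      unfolding pvec_def d_def t_def
      using sum_coord[of "\<lambda>k. real (sylv_t g (CARD('n) + 1)) / real (sylv_s g k)", where 'n='n]
      by (simp add: sum_distrib_left)
    also have "\<dots> = t * (1 / real g - 1 / t)" using sum_sylv[OF g, of d] by (simp add: t_def)
    also have "\<dots> = t / real g - 1" using tpos by (simp add: field_simps)
    finally show ?thesis by simp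
  qed
  have prod_p: "prod (\<lambda>i. (pvec g :: real^'n) $ i) UNIV = t ^ d * real g / t"
  proof -
    have "prod (\<lambda>i. (pvec g :: real^'n) $ i) UNIV = (\<Prod>k<d. t / real (sylv_s g (Suc k)))"
      unfolding pvec_def d_def t_def
      using prod_coord[of "\<lambda>k. real (sylv_t g (CARD('n) + 1)) / real (sylv_s g k)", where 'n='n]
      by simp
    also have "\<dots> = t ^ d / real (\<Prod>k<d. sylv_s g (Suc k))" by (simp add: prod_dividef)
    also have "real (\<Prod>k<d. sylv_s g (Suc k)) = t / real g"
    proof -
      have "real g * real (\<Prod>k<d. sylv_s g (Suc k)) = t" using prod_sylv[of g d] unfolding t_def by (metis Suc_eq_plus1 of_nat_mult)
      then show ?thesis using g by (simp add: field_simps)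
    qed
    finally show ?thesis using g tpos by (simp add: field_simps)
  qed
  have "Vol ((\<lambda>x. N *v x) ` simp0 (pvec g)) * Vol (polar_dual ((\<lambda>x. N *v x) ` simp0 (pvec g)))
      = (t / real g) ^ (d + 1) / (t ^ d * real g / t)"
    using vol_product_simp0[OF N pvec_pos[OF g]] sum_p prod_p by (simp add: d_def)
  also have "\<dots> = t ^ 2 / real g ^ (d + 2)"
    using tpos g by (simp add: field_simps power_add power2_eq_square)
  finally show ?thesis by (simp add: t_def d_def)
qed


lemma sum_option: "(\<Sum>j\<in>(UNIV :: 'a::finite option set). f j) = f None + (\<Sum>i\<in>UNIV. f (Some i))"
proof -
  have "(\<Sum>j\<in>(UNIV :: 'a::finite option set). f j) = (\<Sum>j\<in>insert None (range Some). f j)"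
    by (simp add: UNIV_option_conv[symmetric])
  also have "\<dots> = f None + (\<Sum>j\<in>range Some. f j)" by (subst sum.insert) auto
  also have "(\<Sum>j\<in>range Some. f j) = (\<Sum>i\<in>UNIV. f (Some i))" by (subst sum.reindex) auto
  finally show ?thesis .
qed

lemma prod_option: "(\<Prod>j\<in>(UNIV :: 'a::finite option set). f j) = f None * (\<Prod>i\<in>UNIV. f (Some i))"
proof -
  have "(\<Prod>j\<in>(UNIV :: 'a::finite option set). f j) = (\<Prod>j\<in>insert None (range Some). f j)"
    by (simp add: UNIV_option_conv[symmetric])
  also have "\<dots> = f None * (\<Prod>j\<in>range Some. f j)" by (subst prod.insert) auto
  also have "(\<Prod>j\<in>range Some. f j) = (\<Prod>i\<in>UNIV. f (Some i))" by (subst prod.reindex) auto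
  finally show ?thesis .
qed

lemma sum_axis_expand: "(\<Sum>i\<in>UNIV. q$i *\<^sub>R axis i (1::real)) = (q :: real^'n)"
proof -
  have "(\<Sum>i\<in>UNIV. q$i * axis i (1::real) $ k) = q$k" for k
  proof -
    have "(\<Sum>i\<in>UNIV. q$i * axis i (1::real) $ k) = (\<Sum>i\<in>UNIV. if i = k then q$i else 0)"
      by (intro sum.cong) (auto simp: axis_def)
    then show ?thesis by simp
  qed
  then show ?thesis by (simp add: vec_eq_iff sum_component)
qed

lemma sylv_s_ge3: "g \<ge> 1 \<Longrightarrow> k \<ge> 2 \<Longrightarrow> sylv_s g k \<ge> 3"
  using sylv_s_strict_mono[of g 1 k] sylv_s_ge2[of g 1] by simp

lemma sylv_t_gt_s:
  assumes g: "g \<ge> 1" and d: "d \<ge> 2" and k: "1 \<le> k" "k \<le> d"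
  shows "sylv_s g k < sylv_t g (d + 1)"
proof -
  have "sylv_s g k \<le> sylv_s g d" using sylv_s_strict_mono[of g k d] g k by (cases "k = d") auto
  moreover have "sylv_s g d \<ge> 3" using sylv_s_ge3[OF g d] .
  moreover have "sylv_t g (d + 1) = sylv_s g d * (sylv_s g d - 1)"
    using d by (cases d) (auto simp: sylv_t_def)
  moreover have "sylv_s g d * 2 \<le> sylv_s g d * (sylv_s g d - 1)"
    by (rule mult_le_mono2) (use \<open>sylv_s g d \<ge> 3\<close> in simp)
  ultimately show ?thesis by linarith
qed


theorem theorem1p3:
  fixes \<Delta> :: "(real^'n) set" and g :: nat
  assumes "CARD('n) \<ge> 2"
    and "IP_simplex \<Delta>"
    and "g = gorenstein_index \<Delta>"
  shows "Vol \<Delta> * Vol (polar_dual \<Delta>)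
           \<le> real (sylv_t g (CARD('n) + 1)) ^ 2 / real g ^ (CARD('n) + 2)
       \<and> (Vol \<Delta> * Vol (polar_dual \<Delta>)
           = real (sylv_t g (CARD('n) + 1)) ^ 2 / real g ^ (CARD('n) + 2)
         \<longleftrightarrow> (\<exists>H::real^'n^'n. GLQ H \<and>
                GLZ_equiv \<Delta> ((\<lambda>x. H *v x) ` extremal_simplex g)))"
proof -
  note d2 = assms(1) and IP = assms(2) and gdef = assms(3)
  define d where "d = CARD('n)"
  obtain M q where dM: "det M \<noteq> 0" and Mrat: "\<forall>i j. M$i$j \<in> \<rat>" and qpos: "\<forall>i. q$i > 0"
    and qrat: "rat_vec q" and Deq: "\<Delta> = (\<lambda>x. M *v x) ` simp0 q"
    and vD: "vertices \<Delta> = (\<lambda>x. M *v x) ` (range (\<lambda>i. axis i 1) \<union> {-q})"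
    and vrat: "\<forall>v\<in>vertices \<Delta>. rat_vec v"
    using IP_setup[OF IP] by blast
  note gi = gorenstein_integrality[OF dM Mrat qpos qrat Deq vD vrat]
  have g1: "g \<ge> 1" using gi(1) gdef by simp
  have gpos: "real g > 0" using g1 by simp
  define s where "s = sum (\<lambda>j. q$j) UNIV"
  have s0: "s \<ge> 0" unfolding s_def using qpos by (intro sum_nonneg) (auto intro: less_imp_le)
  have qp: "q$i > 0" for i using qpos by auto
  define av :: "'n option \<Rightarrow> real" where
    "av j = (case j of None \<Rightarrow> real g * (1 + s) | Some i \<Rightarrow> real g * ((1 + s) / q$i))" for j
  have avInt: "av j \<in> \<int>" for j
    using gi(2,3) gdef unfolding av_def s_def by (cases j) auto
  have avpos: "av j > 0" for j
    using gpos s0 qp unfolding av_def by (cases j) auto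
  define a :: "'n option \<Rightarrow> nat" where "a j = nat \<lfloor>av j\<rfloor>" for j
  have ra: "real (a j) = av j" for j
  proof -
    have "real_of_int \<lfloor>av j\<rfloor> = av j" using avInt[of j] by (rule of_int_floor)
    moreover then have "\<lfloor>av j\<rfloor> \<ge> 0" using avpos[of j] by linarith
    ultimately show ?thesis unfolding a_def by simp
  qed
  have apos: "a j > 0" for j using ra[of j] avpos[of j] by simp
  have sum_a: "(\<Sum>j\<in>UNIV. 1 / real (a j)) = 1 / real g"
  proof -
    have "(\<Sum>j\<in>UNIV. 1 / real (a j)) = 1 / (real g * (1 + s)) + (\<Sum>i\<in>UNIV. q$i / (real g * (1 + s)))"
      unfolding sum_option ra av_def using qp by simp
    also have "\<dots> = (1 + s) / (real g * (1 + s))"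
      by (simp add: sum_divide_distrib[symmetric] s_def add_divide_distrib)
    also have "\<dots> = 1 / real g" using s0 by simp
    finally show ?thesis .
  qed
  have prod_a: "(\<Prod>j\<in>UNIV. real (a j)) = real g ^ (d + 1) * ((1 + s) ^ (d + 1) / prod (\<lambda>i. q$i) UNIV)"
  proof -
    have "(\<Prod>j\<in>UNIV. real (a j)) = real g * (1 + s) * (\<Prod>i\<in>UNIV. real g * ((1 + s) / q$i))"
      unfolding prod_option ra av_def by simp
    also have "(\<Prod>i\<in>UNIV. real g * ((1 + s) / q$i)) = real g ^ d * ((1 + s) ^ d / prod (\<lambda>i. q$i) UNIV)"
      by (simp add: prod.distrib prod_dividef d_def power_mult_distrib)
    finally show ?thesis by (simp add: field_simps power_add)
  qed
  have VP: "Vol \<Delta> * Vol (polar_dual \<Delta>) = (1 + s) ^ (d + 1) / prod (\<lambda>i. q$i) UNIV"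
    unfolding Deq using vol_product_simp0[OF dM qp] by (simp add: s_def d_def)
  have VP2: "Vol \<Delta> * Vol (polar_dual \<Delta>) = (\<Prod>j\<in>UNIV. real (a j)) / real g ^ (d + 1)"
    unfolding VP prod_a using gpos by simp
  have cardo: "CARD('n option) = d + 1" by (simp add: d_def)
  obtain x where xmono: "\<And>i j. i \<le> j \<Longrightarrow> j < d + 1 \<Longrightarrow> x i \<le> x j"
    and ximg: "x ` {..<d+1} = range a"
    and xsum: "\<And>f::nat\<Rightarrow>real. (\<Sum>i<d+1. f (x i)) = (\<Sum>j\<in>UNIV. f (a j))"
    and xprod: "\<And>f::nat\<Rightarrow>real. (\<Prod>i<d+1. f (x i)) = (\<Prod>j\<in>UNIV. f (a j))"
    using sort_fun[of a] unfolding cardo by metis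
  have xpos: "x i > 0" if "i < d + 1" for i
  proof -
    have "x i \<in> range a" using ximg that by auto
    then show ?thesis using apos by auto
  qed
  have xs: "(\<Sum>i<d+1. 1 / real (x i)) = 1 / real g" using xsum[of "\<lambda>y. 1 / real y"] sum_a by simp
  have xp: "real (\<Prod>i<d+1. x i) = (\<Prod>j\<in>UNIV. real (a j))" using xprod[of real] by simp
  have E1: "real (\<Prod>i<d+1. x i) \<le> real (sylv_t g (d+1))^2 / real g"
    by (rule egyptian(1)[where n="d+1", OF g1 _ _ _ xs]) (auto intro: xpos xmono)
  define t where "t = sylv_t g (d + 1)"
  have tpos: "real t > 0" using sylv_t_pos[OF g1, of "d+1"] by (simp add: t_def)
  have VPx: "Vol \<Delta> * Vol (polar_dual \<Delta>) = real (\<Prod>i<d+1. x i) / real g ^ (d + 1)"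
    using VP2 xp by simp
  have bound_eq: "real t ^ 2 / real g ^ (d + 2) = (real t ^ 2 / real g) / real g ^ (d + 1)"
    using gpos by (simp add: field_simps)
  have ineq: "Vol \<Delta> * Vol (polar_dual \<Delta>) \<le> real t ^ 2 / real g ^ (d + 2)"
    unfolding VPx bound_eq using E1 gpos unfolding t_def by (intro divide_right_mono) auto
  have eq_iff: "Vol \<Delta> * Vol (polar_dual \<Delta>) = real t ^ 2 / real g ^ (d + 2)
      \<longleftrightarrow> (\<exists>H::real^'n^'n. GLQ H \<and> GLZ_equiv \<Delta> ((\<lambda>x. H *v x) ` extremal_simplex g))"
  proof
    assume eq: "Vol \<Delta> * Vol (polar_dual \<Delta>) = real t ^ 2 / real g ^ (d + 2)"
    have h: "real (\<Prod>i<d+1. x i) / real g ^ (d+1) = (real t ^ 2 / real g) / real g ^ (d+1)"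
      using eq unfolding VPx bound_eq .
    have nz: "real g ^ (d+1) \<noteq> 0" using gpos by simp
    have "real (\<Prod>i<d+1. x i) = real (\<Prod>i<d+1. x i) / real g ^ (d+1) * real g ^ (d+1)"
      using nz by simp
    also have "\<dots> = (real t ^ 2 / real g) / real g ^ (d+1) * real g ^ (d+1)" by (simp only: h)
    also have "\<dots> = real t ^ 2 / real g" using nz by simp
    finally have "real (\<Prod>i<d+1. x i) = real t ^ 2 / real g" .
    then have eqt: "real (\<Prod>i<d+1. x i) = real (sylv_t g (d+1)) ^ 2 / real g" by (simp add: t_def)
    have E2: "(\<forall>i<d+1-1. x i = sylv_s g (Suc i)) \<and> x (d+1-1) = sylv_t g (d+1)"
      by (rule egyptian(2)[where n="d+1", OF g1 _ _ _ xs eqt]) (auto intro: xpos xmono)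
    then have xv: "\<forall>i<d. x i = sylv_s g (Suc i)" "x d = t" by (simp_all add: t_def)
    define SV where "SV = (\<lambda>k. sylv_s g (Suc k)) ` {..<d} \<union> {t}"
    have ra_SV: "range a = SV"
    proof -
      have "x ` {..<d+1} = x ` {..<d} \<union> {x d}" by (auto simp: lessThan_Suc)
      also have "x ` {..<d} = (\<lambda>k. sylv_s g (Suc k)) ` {..<d}" using xv(1) by auto
      finally show ?thesis using ximg xv(2) by (simp add: SV_def)
    qed
    have d2': "d \<ge> 2" using d2 by (simp add: d_def)
    have sinj: "inj_on (\<lambda>k. sylv_s g (Suc k)) {..<d}"
    proof (rule inj_onI)
      fix k l assume "k \<in> {..<d}" "l \<in> {..<d}" "sylv_s g (Suc k) = sylv_s g (Suc l)"
      then have eq: "sylv_s g (Suc k) = sylv_s g (Suc l)" by simp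
      show "k = l"
      proof (rule ccontr)
        assume "k \<noteq> l"
        then consider "k < l" | "l < k" by linarith
        then show False
        proof cases
          case 1
          then have "sylv_s g (Suc k) < sylv_s g (Suc l)" by (intro sylv_s_strict_mono[OF g1]) auto
          then show False using eq by simp
        next
          case 2
          then have "sylv_s g (Suc l) < sylv_s g (Suc k)" by (intro sylv_s_strict_mono[OF g1]) auto
          then show False using eq by simp
        qed
      qed
    qed
    have tnot: "t \<notin> (\<lambda>k. sylv_s g (Suc k)) ` {..<d}"
    proof
      assume "t \<in> (\<lambda>k. sylv_s g (Suc k)) ` {..<d}"
      then obtain k where k: "k < d" "t = sylv_s g (Suc k)" by auto
      have "sylv_s g (Suc k) < sylv_t g (d + 1)" by (rule sylv_t_gt_s[OF g1 d2']) (use k in auto)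
      then show False using k by (simp add: t_def)
    qed
    have cardSV: "card SV = d + 1"
      unfolding SV_def using sinj tnot by (simp add: card_image)
    have ainj: "inj a"
      by (rule eq_card_imp_inj_on) (use ra_SV cardSV cardo in auto)
    define b where "b = inv a"
    have ab: "a (b y) = y" if "y \<in> SV" for y using that ra_SV unfolding b_def by (metis f_inv_into_f)
    define c :: "'n \<Rightarrow> nat" where "c = coord_idx"
    have crange: "c i \<in> {1..d}" for i using coord_idx_range[of i] by (simp add: c_def d_def)
    have cinj: "inj c" using coord_idx_bij by (auto simp: bij_betw_def c_def)
    have sc_SV: "sylv_s g (c i) \<in> SV" for i
    proof -
      have "c i = Suc (c i - 1)" "c i - 1 < d" using crange[of i] by auto
      then have "sylv_s g (c i) \<in> (\<lambda>k. sylv_s g (Suc k)) ` {..<d}"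
        by (intro image_eqI[of _ _ "c i - 1"]) auto
      then show ?thesis unfolding SV_def by blast
    qed
    have t_SV: "t \<in> SV" by (simp add: SV_def)
    have sc_ne_t: "sylv_s g (c i) \<noteq> t" for i
      using sylv_t_gt_s[OF g1 d2', of "c i"] crange[of i] by (auto simp: t_def)
    have sc_inj: "sylv_s g (c i) = sylv_s g (c j) \<Longrightarrow> i = j" for i j
    proof -
      assume h: "sylv_s g (c i) = sylv_s g (c j)"
      have "c i = c j"
      proof (rule ccontr)
        assume "c i \<noteq> c j"
        then consider "c i < c j" | "c j < c i" by linarith
        then show False
        proof cases
          case 1
          then have "sylv_s g (c i) < sylv_s g (c j)" using crange[of i] by (intro sylv_s_strict_mono[OF g1]) auto
          then show False using h by simp
        next
          case 2
          then have "sylv_s g (c j) < sylv_s g (c i)" using crange[of j] by (intro sylv_s_strict_mono[OF g1]) auto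
          then show False using h by simp
        qed
      qed
      then show "i = j" using cinj by (simp add: inj_eq)
    qed
    define \<phi> :: "'n option \<Rightarrow> 'n option" where
      "\<phi> z = (case z of None \<Rightarrow> b t | Some i \<Rightarrow> b (sylv_s g (c i)))" for z
    have a\<phi>: "a (\<phi> None) = t" "a (\<phi> (Some i)) = sylv_s g (c i)" for i
      unfolding \<phi>_def using ab t_SV sc_SV by auto
    have \<phi>inj: "inj \<phi>"
    proof (rule injI)
      fix o1 o2 assume h: "\<phi> o1 = \<phi> o2"
      then have "a (\<phi> o1) = a (\<phi> o2)" by simp
      then show "o1 = o2"
      proof (cases o1; cases o2)
        fix i j assume "o1 = Some i" "o2 = Some j" "a (\<phi> o1) = a (\<phi> o2)"
        then have "sylv_s g (c i) = sylv_s g (c j)" using a\<phi> by simp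
        then show "o1 = o2" using sc_inj \<open>o1 = Some i\<close> \<open>o2 = Some j\<close> by simp
      qed (use a\<phi> sc_ne_t in \<open>auto dest: sym\<close>)
    qed
    have \<phi>surj: "surj \<phi>" using \<phi>inj by (simp add: finite_UNIV_inj_surj)
    define vert :: "'n option \<Rightarrow> real^'n" where
      "vert z = (case z of None \<Rightarrow> M *v (-q) | Some i \<Rightarrow> M *v axis i 1)" for z
    have rel: "(\<Sum>j\<in>UNIV. (1 / real (a j)) *\<^sub>R vert j) = 0"
    proof -
      have "(\<Sum>j\<in>UNIV. (1 / real (a j)) *\<^sub>R vert j)
          = (1 / (real g * (1 + s))) *\<^sub>R (M *v (-q) + (\<Sum>i\<in>UNIV. q$i *\<^sub>R (M *v axis i 1)))"
      proof -
        define cc where "cc = 1 / (real g * (1 + s))"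
        have c0: "1 / real (a None) = cc" by (simp add: ra av_def cc_def)
        have ci: "1 / real (a (Some i)) = q$i * cc" for i
          using qp[of i] s0 gpos by (simp add: ra av_def cc_def field_simps)
        have "(\<Sum>j\<in>UNIV. (1 / real (a j)) *\<^sub>R vert j)
            = cc *\<^sub>R (M *v (-q)) + (\<Sum>i\<in>UNIV. (q$i * cc) *\<^sub>R (M *v axis i 1))"
          unfolding sum_option c0 ci vert_def by simp
        also have "(\<Sum>i\<in>UNIV. (q$i * cc) *\<^sub>R (M *v axis i 1)) = cc *\<^sub>R (\<Sum>i\<in>UNIV. q$i *\<^sub>R (M *v axis i 1))"
          by (simp add: scaleR_sum_right mult.commute)
        finally show ?thesis by (simp add: cc_def scaleR_add_right)
      qed
      also have "(\<Sum>i\<in>UNIV. q$i *\<^sub>R (M *v axis i 1)) = M *v q"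
      proof -
        have "(\<Sum>i\<in>UNIV. q$i *\<^sub>R (M *v axis i 1)) = M *v (\<Sum>i\<in>UNIV. q$i *\<^sub>R axis i 1)"
          by (simp add: vec.sum matrix_vector_mult_scaleR)
        then show ?thesis by (simp add: sum_axis_expand)
      qed
      moreover have "M *v (-q) = - (M *v q)" by (simp add: vec_eq_iff matrix_vector_mult_def sum_negf)
      ultimately show ?thesis by simp
    qed
    define w where "w i = vert (\<phi> (Some i))" for i
    define wst where "wst = vert (\<phi> None)"
    have rel2: "(1 / real t) *\<^sub>R wst + (\<Sum>i\<in>UNIV. (1 / real (sylv_s g (c i))) *\<^sub>R w i) = 0"
    proof -
      have "(\<Sum>j\<in>UNIV. (1 / real (a j)) *\<^sub>R vert j) = (\<Sum>z\<in>UNIV. (1 / real (a (\<phi> z))) *\<^sub>R vert (\<phi> z))"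
        using sum.reindex[OF \<phi>inj, of "\<lambda>j. (1 / real (a j)) *\<^sub>R vert j"] \<phi>surj by simp
      then show ?thesis using rel unfolding sum_option a\<phi> w_def wst_def by simp
    qed
    define p :: "real^'n" where "p = pvec g"
    have pc: "p$i = real t / real (sylv_s g (c i))" for i by (simp add: p_def pvec_def c_def t_def d_def)
    define H :: "real^'n^'n" where "H = (\<chi> r k. w k $ r)"
    have Hax: "H *v axis i 1 = w i" for i unfolding H_def by (rule matrix_cols_axis)
    have Hp: "H *v (-p) = wst"
    proof -
      have "H *v (-p) = (\<Sum>i\<in>UNIV. (- p$i) *\<^sub>R w i)" unfolding H_def matrix_cols_mult by simp
      also have "\<dots> = - real t *\<^sub>R (\<Sum>i\<in>UNIV. (1 / real (sylv_s g (c i))) *\<^sub>R w i)"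
        by (simp add: pc scaleR_sum_right)
      also have "(\<Sum>i\<in>UNIV. (1 / real (sylv_s g (c i))) *\<^sub>R w i) = - ((1 / real t) *\<^sub>R wst)"
        using rel2 by (simp add: eq_neg_iff_add_eq_0 add.commute)
      finally show ?thesis using tpos by simp
    qed
    have vertimg: "vert ` UNIV = (\<lambda>x. M *v x) ` (range (\<lambda>i. axis i 1) \<union> {-q})"
      unfolding UNIV_option_conv image_insert image_image vert_def option.case by (auto simp: image_iff)
    have Himg: "(\<lambda>x. H *v x) ` (range (\<lambda>i. axis i 1) \<union> {-p}) = vert ` UNIV"
    proof -
      have "(\<lambda>x. H *v x) ` (range (\<lambda>i. axis i 1) \<union> {-p}) = range w \<union> {wst}"
        by (auto simp: Hax Hp image_iff)
      also have "\<dots> = (vert \<circ> \<phi>) ` UNIV" unfolding w_def wst_def UNIV_option_conv by auto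
      also have "\<dots> = vert ` (\<phi> ` UNIV)" by (simp add: image_comp)
      also have "\<dots> = vert ` UNIV" using \<phi>surj by simp
      finally show ?thesis .
    qed
    have DH: "\<Delta> = (\<lambda>x. H *v x) ` extremal_simplex g"
    proof -
      have "\<Delta> = convex hull ((\<lambda>x. M *v x) ` (range (\<lambda>i. axis i 1) \<union> {-q}))"
        unfolding Deq simp0_def convex_hull_linear_image[OF matrix_vector_mul_linear] ..
      also have "\<dots> = convex hull ((\<lambda>x. H *v x) ` (range (\<lambda>i. axis i 1) \<union> {-p}))"
        unfolding Himg vertimg ..
      also have "\<dots> = (\<lambda>x. H *v x) ` extremal_simplex g"
        unfolding extremal_eq p_def[symmetric] simp0_def convex_hull_linear_image[OF matrix_vector_mul_linear] ..
      finally show ?thesis .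
    qed
    have wV: "w i \<in> vertices \<Delta>" for i using vD vertimg unfolding w_def by auto
    have Hrat: "\<forall>i j. H$i$j \<in> \<rat>" using wV vrat unfolding H_def rat_vec_def by auto
    have "0 \<in> interior \<Delta>" using IP unfolding IP_simplex_def by blast
    then have "surj (\<lambda>x. H *v x)" by (rule interior_range_surj) (use DH in auto)
    then have dH: "det H \<noteq> 0" by (rule surj_det)
    have "GLQ H" using Hrat dH by (simp add: GLQ_def)
    moreover have "GLZ_equiv \<Delta> ((\<lambda>x. H *v x) ` extremal_simplex g)"
      unfolding GLZ_equiv_def
    proof (rule exI[of _ "mat 1"], intro conjI)
      show "\<forall>i j. (mat 1 :: real^'n^'n) $ i $ j \<in> \<int>" by (simp add: mat_def)
      show "\<bar>det (mat 1 :: real^'n^'n)\<bar> = 1" by simp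
      show "\<Delta> = (\<lambda>x. mat 1 *v x) ` ((\<lambda>x. H *v x) ` extremal_simplex g)" using DH by simp
    qed
    ultimately show "\<exists>H::real^'n^'n. GLQ H \<and> GLZ_equiv \<Delta> ((\<lambda>x. H *v x) ` extremal_simplex g)" by blast
  next
    assume "\<exists>H::real^'n^'n. GLQ H \<and> GLZ_equiv \<Delta> ((\<lambda>x. H *v x) ` extremal_simplex g)"
    then obtain H U :: "real^'n^'n" where H: "GLQ H" and U: "\<bar>det U\<bar> = 1"
      and DU: "\<Delta> = (\<lambda>x. U *v x) ` ((\<lambda>x. H *v x) ` extremal_simplex g)"
      unfolding GLZ_equiv_def by blast
    have D2: "\<Delta> = (\<lambda>x. (U ** H) *v x) ` simp0 (pvec g)"
      unfolding DU extremal_eq by (simp add: image_image matrix_vector_mul_assoc)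
    have "det (U ** H) \<noteq> 0" using H U by (simp add: GLQ_def det_mul)
    then show "Vol \<Delta> * Vol (polar_dual \<Delta>) = real t ^ 2 / real g ^ (d + 2)"
      unfolding D2 using extremal_vol[OF g1] by (simp add: t_def d_def)
  qed
  show ?thesis using ineq eq_iff unfolding t_def d_def by simp
qed


end
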